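(* Let $T$ be (the surface of) a regular tetrahedron with its intrinsic path metric. The space $T\times T$ cannot be partitioned as $E_1\sqcup E_2\sqcup E_3$ with a geodesic motion-planning rule on each $E_i$.
   Context: For a metric space $X$, let $P(X)$ denote the space of paths in $X$. A geodesic motion-planning rule (GMPR) on a subset $E\subseteq X\times X$ is a continuous function $\phi:E\to P(X)$ such that for every $(x_0,x_1)\in E$, $\phi(x_0,x_1)$ is a minimal (shortest) geodesic from $x_0$ to $x_1$. *)

theory Defs
  imports "HOL-Analysis.Analysis"
begin

definition path_len :: "('a \<Rightarrow> 'a \<Rightarrow> real) \<Rightarrow> (real \<Rightarrow> 'a) \<Rightarrow> ereal" where
  "path_len d g = (SUP ts \<in> {ts::real list. ts \<noteq> [] \<and> sorted ts \<and> hd ts = 0 \<and> last ts = 1}.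
      ereal (\<Sum>i<length ts - 1. d (g (ts ! i)) (g (ts ! Suc i))))"

definition mpath :: "'a set \<Rightarrow> ('a \<Rightarrow> 'a \<Rightarrow> real) \<Rightarrow> (real \<Rightarrow> 'a) \<Rightarrow> bool" where
  "mpath X d g \<longleftrightarrow> (\<forall>t\<in>{0..1}. g t \<in> X) \<and>
     (\<forall>t\<in>{0..1}. \<forall>e>0. \<exists>\<delta>>0. \<forall>s\<in>{0..1}. \<bar>s - t\<bar> < \<delta> \<longrightarrow> d (g s) (g t) < e)"

definition min_geodesic :: "'a set \<Rightarrow> ('a \<Rightarrow> 'a \<Rightarrow> real) \<Rightarrow> 'a \<Rightarrow> 'a \<Rightarrow> (real \<Rightarrow> 'a) \<Rightarrow> bool" where
  "min_geodesic X d x0 x1 g \<longleftrightarrow> mpath X d g \<and> g 0 = x0 \<and> g 1 = x1 \<and>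
     path_len d g = ereal (d x0 x1)"

text \<open>Geodesic motion-planning rule on E \<subseteq> X \<times> X: continuous for the max-metric on
  X \<times> X and the uniform (= compact-open) metric on the path space P(X).\<close>
definition gmpr :: "'a set \<Rightarrow> ('a \<Rightarrow> 'a \<Rightarrow> real) \<Rightarrow> ('a \<times> 'a) set \<Rightarrow> ('a \<times> 'a \<Rightarrow> real \<Rightarrow> 'a) \<Rightarrow> bool" where
  "gmpr X d E \<phi> \<longleftrightarrow> E \<subseteq> X \<times> X \<and>
     (\<forall>p\<in>E. min_geodesic X d (fst p) (snd p) (\<phi> p)) \<and>
     (\<forall>p\<in>E. \<forall>e>0. \<exists>\<delta>>0. \<forall>q\<in>E.
        max (d (fst p) (fst q)) (d (snd p) (snd q)) < \<delta> \<longrightarrow>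
        (\<forall>t\<in>{0..1}. d (\<phi> p t) (\<phi> q t) < e))"

definition tet_surface :: "(real^3) set" where
  "tet_surface = frontier (convex hull {vector [1,1,1], vector [1,-1,-1], vector [-1,1,-1], vector [-1,-1,1]})"

definition tet_dist :: "real^3 \<Rightarrow> real^3 \<Rightarrow> real" where
  "tet_dist x y = real_of_ereal (INF g \<in> {g. path g \<and> path_image g \<subseteq> tet_surface \<and>
      pathstart g = x \<and> pathfinish g = y}. path_len dist g)"

end

theory Submission
  imports Defs
begin

definition tri :: "real \<Rightarrow> real" where
  "tri t = 1 - 2 * \<bar>t - 2 * of_int \<lfloor>(t + 1) / 2\<rfloor>\<bar>"

lemma tri_floor_bound: fixes t :: real shows "\<bar>t - 2 * of_int \<lfloor>(t + 1) / 2\<rfloor>\<bar> \<le> 1"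
proof -
  have a: "of_int \<lfloor>(t + 1) / 2\<rfloor> \<le> (t+1)/2" by (rule of_int_floor_le)
  have b: "(t+1)/(2::real) < of_int \<lfloor>(t + 1) / 2\<rfloor> + 1" by (rule real_of_int_floor_add_one_gt)
  show ?thesis using a b by (simp add: abs_if field_simps)
qed

lemma tri_eq:
  assumes "\<bar>t - 2 * of_int m\<bar> \<le> 1"
  shows "tri t = 1 - 2 * \<bar>t - 2 * of_int m\<bar>"
proof -
  define n where "n = \<lfloor>(t + 1) / 2\<rfloor>"
  have hn: "\<bar>t - 2 * of_int n\<bar> \<le> 1" unfolding n_def by (rule tri_floor_bound)
  have "\<bar>of_int m - of_int n\<bar> \<le> (1::real)" using assms hn by (simp add: abs_if split: if_splits)
  hence "\<bar>m - n\<bar> \<le> 1" by linarith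
  hence "m = n \<or> m = n + 1 \<or> m = n - 1" by auto
  thus ?thesis
  proof (elim disjE)
    assume "m = n" thus ?thesis by (simp add: tri_def n_def)
  next
    assume "m = n + 1"
    hence "\<bar>t - 2 * of_int n\<bar> = 1" "\<bar>t - 2 * of_int m\<bar> = 1" using assms hn by (simp_all add: abs_if split: if_splits)
    thus ?thesis by (simp add: tri_def n_def)
  next
    assume "m = n - 1"
    hence "\<bar>t - 2 * of_int n\<bar> = 1" "\<bar>t - 2 * of_int m\<bar> = 1" using assms hn by (simp_all add: abs_if split: if_splits)
    thus ?thesis by (simp add: tri_def n_def)
  qed
qed

lemma tri_ex: "\<exists>m::int. \<bar>t - 2 * of_int m\<bar> \<le> 1 \<and> tri t = 1 - 2 * \<bar>t - 2 * of_int m\<bar>"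
  using tri_floor_bound tri_def by blast

lemma tri_ge: "tri t \<ge> 1 - 2 * \<bar>t - 2 * of_int (m::int)\<bar>"
proof (cases "\<bar>t - 2 * of_int m\<bar> \<le> 1")
  case True thus ?thesis using tri_eq by simp
next
  case False
  obtain n where n: "\<bar>t - 2 * of_int n\<bar> \<le> 1" "tri t = 1 - 2 * \<bar>t - 2 * of_int n\<bar>" using tri_ex by blast
  have "\<bar>t - 2 * of_int m\<bar> > 1" using False by simp
  thus ?thesis using n by simp
qed

lemma tri_lb: "-1 \<le> tri t"
  using tri_floor_bound[of t] unfolding tri_def by simp
lemma tri_ub: "tri t \<le> 1"
  unfolding tri_def by simp

lemma tri_lipschitz: "\<bar>tri s - tri t\<bar> \<le> 2 * \<bar>s - t\<bar>"
proof -
  obtain m where m: "tri t = 1 - 2 * \<bar>t - 2 * of_int m\<bar>" using tri_ex by blast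
  obtain n where n: "tri s = 1 - 2 * \<bar>s - 2 * of_int n\<bar>" using tri_ex by blast
  have "tri s \<ge> 1 - 2 * \<bar>s - 2 * of_int m\<bar>" by (rule tri_ge)
  moreover have "tri t \<ge> 1 - 2 * \<bar>t - 2 * of_int n\<bar>" by (rule tri_ge)
  ultimately show ?thesis using m n by (simp add: abs_if split: if_splits)
qed

lemma tri_periodic: "tri (t + 2 * of_int k) = tri t"
proof -
  obtain m where m: "\<bar>t - 2 * of_int m\<bar> \<le> 1" "tri t = 1 - 2 * \<bar>t - 2 * of_int m\<bar>" using tri_ex by blast
  have "\<bar>(t + 2 * of_int k) - 2 * of_int (m + k)\<bar> \<le> 1" using m by (simp add: algebra_simps)
  hence "tri (t + 2 * of_int k) = 1 - 2 * \<bar>(t + 2 * of_int k) - 2 * of_int (m + k)\<bar>" by (rule tri_eq)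
  thus ?thesis using m by (simp add: algebra_simps)
qed

lemma tri_even: "tri (- t) = tri t"
proof -
  obtain m where m: "\<bar>t - 2 * of_int m\<bar> \<le> 1" "tri t = 1 - 2 * \<bar>t - 2 * of_int m\<bar>" using tri_ex by blast
  have e: "(- t) - 2 * of_int (- m) = - (t - 2 * of_int m)" by simp
  have "\<bar>(- t) - 2 * of_int (- m)\<bar> \<le> 1" using m by (simp only: e abs_minus_cancel)
  hence "tri (-t) = 1 - 2 * \<bar>(- t) - 2 * of_int (- m)\<bar>" by (rule tri_eq)
  moreover have "\<bar>(- t) - 2 * of_int (- m)\<bar> = \<bar>t - 2 * of_int m\<bar>" by (simp only: e abs_minus_cancel)
  ultimately show ?thesis using m by simp
qed

lemma tri_inj:
  assumes "tri s = tri t"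
  shows "\<exists>e k. (e = (1::real) \<or> e = -1) \<and> s = e * t + 2 * of_int (k::int)"
proof -
  obtain m where m: "\<bar>t - 2 * of_int m\<bar> \<le> 1" "tri t = 1 - 2 * \<bar>t - 2 * of_int m\<bar>" using tri_ex by blast
  obtain n where n: "\<bar>s - 2 * of_int n\<bar> \<le> 1" "tri s = 1 - 2 * \<bar>s - 2 * of_int n\<bar>" using tri_ex by blast
  have "\<bar>s - 2 * of_int n\<bar> = \<bar>t - 2 * of_int m\<bar>" using assms m n by simp
  hence "s - 2 * of_int n = t - 2 * of_int m \<or> s - 2 * of_int n = - (t - 2 * of_int m)"
    by (simp add: abs_if split: if_splits) 
  thus ?thesis
  proof
    assume "s - 2 * of_int n = t - 2 * of_int m"
    hence "s = 1 * t + 2 * of_int (n - m)" by simp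
    thus ?thesis by blast
  next
    assume "s - 2 * of_int n = - (t - 2 * of_int m)"
    hence "s = (-1) * t + 2 * of_int (n + m)" by simp
    thus ?thesis by blast
  qed
qed

lemma tri_01: "0 \<le> t \<Longrightarrow> t \<le> 1 \<Longrightarrow> tri t = 1 - 2 * t"
  using tri_eq[of t 0] by simp
lemma tri_12: "1 \<le> t \<Longrightarrow> t \<le> 2 \<Longrightarrow> tri t = 2 * t - 3"
  using tri_eq[of t 1] by simp
lemma tri_23: "2 \<le> t \<Longrightarrow> t \<le> 3 \<Longrightarrow> tri t = 1 - 2 * (t - 2)"
  using tri_eq[of t 1] by simp
lemma tri_m10: "-1 \<le> t \<Longrightarrow> t \<le> 0 \<Longrightarrow> tri t = 1 + 2 * t"
  using tri_eq[of t 0] by simp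
lemma tri_m2m1: "-2 \<le> t \<Longrightarrow> t \<le> -1 \<Longrightarrow> tri t = -3 - 2 * t"
  using tri_eq[of t "-1"] by simp

definition Vt :: "nat \<Rightarrow> real^3" where
  "Vt k = (if k = 1 then vector [1,1,1] else if k = 2 then vector [1,-1,-1]
           else if k = 3 then vector [-1,1,-1] else vector [-1,-1,1])"

definition lam :: "nat \<Rightarrow> real^3 \<Rightarrow> real" where
  "lam k z = (1 + Vt k \<bullet> z) / 4"

lemma lam_simps:
  "lam 1 z = (1 + z$1 + z$2 + z$3) / 4"
  "lam 2 z = (1 + z$1 - z$2 - z$3) / 4"
  "lam 3 z = (1 - z$1 + z$2 - z$3) / 4"
  "lam 4 z = (1 - z$1 - z$2 + z$3) / 4"
  by (simp_all add: lam_def Vt_def inner_vec_def sum_3)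

lemma lam_Suc0: "lam (Suc 0) z = (1 + z$1 + z$2 + z$3) / 4"
  using lam_simps(1) by simp

lemmas lamS = lam_simps lam_Suc0

definition face :: "nat \<Rightarrow> (real^3) set" where
  "face k = {z. lam k z = 0 \<and> 0 \<le> lam 1 z \<and> 0 \<le> lam 2 z \<and> 0 \<le> lam 3 z \<and> 0 \<le> lam 4 z}"

definition Tset :: "(real^3) set" where
  "Tset = {z. (0 \<le> lam 1 z \<and> 0 \<le> lam 2 z \<and> 0 \<le> lam 3 z \<and> 0 \<le> lam 4 z) \<and>
              (lam 1 z = 0 \<or> lam 2 z = 0 \<or> lam 3 z = 0 \<or> lam 4 z = 0)}"

definition Kset :: "(real^3) set" where
  "Kset = {z. 0 \<le> lam 1 z \<and> 0 \<le> lam 2 z \<and> 0 \<le> lam 3 z \<and> 0 \<le> lam 4 z}"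

definition Iset :: "(real^3) set" where
  "Iset = {z. 0 < lam 1 z \<and> 0 < lam 2 z \<and> 0 < lam 3 z \<and> 0 < lam 4 z}"

lemma lam_affine: "u + v = 1 \<Longrightarrow> lam k (u *\<^sub>R x + v *\<^sub>R y) = u * lam k x + v * lam k y"
  unfolding lam_def by (simp add: inner_add_right field_simps)

lemma decomp: "z = lam 1 z *\<^sub>R Vt 1 + lam 2 z *\<^sub>R Vt 2 + lam 3 z *\<^sub>R Vt 3 + lam 4 z *\<^sub>R Vt 4"
  unfolding vec_eq_iff forall_3 by (simp add: lamS Vt_def field_simps)

lemma lam_sum: "lam 1 z + lam 2 z + lam 3 z + lam 4 z = 1"
  by (simp add: lamS field_simps)

lemma lam_sum': "lam (Suc 0) z + (lam 2 z + (lam 3 z + lam 4 z)) = 1"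
  by (simp add: lamS field_simps)

lemma Vt_set: "{vector [1,1,1], vector [1,-1,-1], vector [-1,1,-1], vector [-1,-1,1]} = Vt ` {1,2,3,4}"
  unfolding image_insert image_empty by (simp add: Vt_def)

lemma hull_eq: "convex hull (Vt ` {1,2,3,4}) = Kset"
proof
  have "convex Kset"
    unfolding convex_def Kset_def
    by (auto simp: lam_affine)
  moreover have "Vt ` {1,2,3,4} \<subseteq> Kset"
    by (auto simp: Kset_def lamS Vt_def)
  ultimately show "convex hull (Vt ` {1,2,3,4}) \<subseteq> Kset"
    by (simp add: hull_minimal)
next
  show "Kset \<subseteq> convex hull (Vt ` {1,2,3,4})"
  proof
    fix z assume z: "z \<in> Kset"
    have "(\<Sum>k\<in>{1::nat,2,3,4}. lam k z *\<^sub>R Vt k) \<in> convex hull (Vt ` {1,2,3,4})"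
      apply (rule convex_sum)
         apply simp
        apply (rule convex_convex_hull)
      subgoal using lam_sum'[of z] by simp
      subgoal using z by (auto simp: Kset_def)
      subgoal by (auto intro: hull_inc)
      done
    moreover have "(\<Sum>k\<in>{1::nat,2,3,4}. lam k z *\<^sub>R Vt k) = z"
      using decomp[of z] by (simp add: add.assoc)
    ultimately show "z \<in> convex hull (Vt ` {1,2,3,4})" by simp
  qed
qed

lemma cont_lam: "continuous_on S (lam k)"
  unfolding lam_def by (intro continuous_intros) auto

lemma closed_Kset: "closed Kset"
  unfolding Kset_def
  by (intro closed_Collect_conj closed_Collect_le continuous_on_const cont_lam)

lemma open_Iset: "open Iset"
  unfolding Iset_def
  by (intro open_Collect_conj open_Collect_less continuous_on_const cont_lam)

lemma Iset_sub: "Iset \<subseteq> Kset" unfolding Iset_def Kset_def by auto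

lemma lam_shift: "lam k (z - c *\<^sub>R Vt k) = lam k z - c * (Vt k \<bullet> Vt k) / 4"
  unfolding lam_def by (simp add: inner_diff_right field_simps)

lemma Vt_inner: "k \<in> {1,2,3,4} \<Longrightarrow> Vt k \<bullet> Vt k = 3"
  by (auto simp: Vt_def inner_vec_def sum_3)

lemma interior_Kset: "interior Kset = Iset"
proof
  show "Iset \<subseteq> interior Kset"
    by (intro interior_maximal Iset_sub open_Iset)
next
  show "interior Kset \<subseteq> Iset"
  proof
    fix z assume zi: "z \<in> interior Kset"
    then obtain e where e: "e > 0" "ball z e \<subseteq> Kset"
      using mem_interior by blast
    have zK: "z \<in> Kset" using zi interior_subset by blast
    have nz: False if k: "k \<in> {1,2,3,4}" "lam k z = 0" for k
    proof -
      define c where "c = e / 4"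
      have c: "c > 0" using e by (simp add: c_def)
      have "dist z (z - c *\<^sub>R Vt k) = c * norm (Vt k)"
        using c by (simp add: dist_norm)
      also have "norm (Vt k) = sqrt 3" using Vt_inner[OF k(1)] by (simp add: norm_eq_sqrt_inner)
      also have "c * sqrt 3 < c * 2"
        using c by (intro mult_strict_left_mono) (auto intro: real_less_lsqrt)
      also have "c * 2 < e" using e by (simp add: c_def)
      finally have "z - c *\<^sub>R Vt k \<in> Kset" using e by auto
      moreover have "lam k (z - c *\<^sub>R Vt k) < 0"
        using lam_shift[of k z c] Vt_inner[OF k(1)] k c by simp
      ultimately show False using k(1) by (auto simp: Kset_def)
    qed
    have "lam 1 z \<noteq> 0" "lam 2 z \<noteq> 0" "lam 3 z \<noteq> 0" "lam 4 z \<noteq> 0"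
      using nz[of 1] nz[of 2] nz[of 3] nz[of 4] by auto
    thus "z \<in> Iset" using zK unfolding Kset_def Iset_def by auto
  qed
qed

lemma tet_surface_eq: "tet_surface = Tset"
proof -
  have "compact (convex hull (Vt ` {1,2,3,4}))"
    by (intro finite_imp_compact_convex_hull) simp
  hence cl: "closure Kset = Kset" using hull_eq by (simp add: closure_closed compact_imp_closed)
  have "Kset - Iset = Tset"
  proof (intro set_eqI iffI)
    fix z assume "z \<in> Kset - Iset"
    thus "z \<in> Tset" unfolding Kset_def Iset_def Tset_def
      by (metis (mono_tags, lifting) DiffE mem_Collect_eq order_le_less)
  next
    fix z assume "z \<in> Tset"
    thus "z \<in> Kset - Iset" unfolding Kset_def Iset_def Tset_def by auto
  qed
  thus ?thesis
    unfolding tet_surface_def Vt_set hull_eq frontier_def cl interior_Kset by simp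
qed

lemma Tset_faces: "Tset = face 1 \<union> face 2 \<union> face 3 \<union> face 4"
  unfolding Tset_def face_def by auto

lemma closed_face: "closed (face k)"
  unfolding face_def
  by (intro closed_Collect_conj closed_Collect_le closed_Collect_eq continuous_on_const cont_lam)

type_synonym pt = "real \<times> real"

definition Qf :: "pt \<Rightarrow> real" where "Qf w = (fst w)\<^sup>2 + fst w * snd w + (snd w)\<^sup>2"
definition rho :: "pt \<Rightarrow> real" where "rho w = sqrt (8 * Qf w)"
definition Em :: "pt \<Rightarrow> pt" where "Em w = (sqrt 2 * (2 * fst w + snd w), sqrt 6 * snd w)"

lemma rho_Em: "rho w = norm (Em w)"
proof -
  have "(sqrt 2 * (2 * fst w + snd w))\<^sup>2 + (sqrt 6 * snd w)\<^sup>2 = 8 * Qf w"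
    by (simp add: power_mult_distrib Qf_def power2_eq_square algebra_simps)
  thus ?thesis by (simp add: rho_def Em_def norm_Pair)
qed

lemma Em_add: "Em (a + b) = Em a + Em b" by (simp add: Em_def algebra_simps)
lemma Em_diff: "Em (a - b) = Em a - Em b" by (simp add: Em_def algebra_simps)
lemma Em_scale: "Em (c *\<^sub>R a) = c *\<^sub>R Em a" by (simp add: Em_def algebra_simps)
lemma Em_minus: "Em (- a) = - Em a" by (simp add: Em_def algebra_simps)
lemma Em_inj: "Em a = Em b \<Longrightarrow> a = b"
  by (cases a; cases b) (simp add: Em_def)

lemma linear_Em: "linear Em"
  by (rule linearI) (simp_all add: Em_add Em_scale)

lemma rho_nonneg: "0 \<le> rho w" by (simp add: rho_Em)
lemma rho_triangle: "rho (a + b) \<le> rho a + rho b" by (simp add: rho_Em Em_add norm_triangle_ineq)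
lemma rho_scale: "rho (c *\<^sub>R w) = \<bar>c\<bar> * rho w" by (simp add: rho_Em Em_scale)
lemma rho_minus: "rho (- w) = rho w" by (simp add: rho_Em Em_minus)
lemma rho_commute: "rho (a - b) = rho (b - a)" using rho_minus[of "a - b"] by simp
lemma rho_zero: "rho 0 = 0" by (simp add: rho_def Qf_def)
lemma rho_tri3: "rho (a - c) \<le> rho (a - b) + rho (b - c)"
  using rho_triangle[of "a - b" "b - c"] by simp
lemma rho_eq_0: "rho w = 0 \<longleftrightarrow> w = 0"
proof
  assume "rho w = 0" hence "Em w = 0" by (simp add: rho_Em)
  hence "Em w = Em 0" by (simp add: Em_def zero_prod_def)
  thus "w = 0" by (rule Em_inj)
qed (simp add: rho_zero)

lemma Qf_ge1: "Qf w \<ge> 3/4 * (fst w)\<^sup>2"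
proof -
  have "Qf w = (snd w + fst w / 2)\<^sup>2 + 3/4 * (fst w)\<^sup>2" by (simp add: Qf_def power2_eq_square algebra_simps)
  thus ?thesis by simp
qed
lemma Qf_ge2: "Qf w \<ge> 3/4 * (snd w)\<^sup>2"
proof -
  have "Qf w = (fst w + snd w / 2)\<^sup>2 + 3/4 * (snd w)\<^sup>2" by (simp add: Qf_def power2_eq_square algebra_simps)
  thus ?thesis by simp
qed
lemma Qf_ge_norm: "Qf w \<ge> ((fst w)\<^sup>2 + (snd w)\<^sup>2) / 2"
proof -
  have "Qf w = (fst w + snd w)\<^sup>2 / 2 + ((fst w)\<^sup>2 + (snd w)\<^sup>2) / 2" by (simp add: Qf_def power2_eq_square field_simps)
  thus ?thesis by simp
qed
lemma Qf_le_norm: "Qf w \<le> 3/2 * ((fst w)\<^sup>2 + (snd w)\<^sup>2)"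
proof -
  have "3/2 * ((fst w)\<^sup>2 + (snd w)\<^sup>2) - Qf w = (fst w - snd w)\<^sup>2 / 2" by (simp add: Qf_def power2_eq_square algebra_simps)
  moreover have "(fst w - snd w)\<^sup>2 / 2 \<ge> 0" by simp
  ultimately show ?thesis by linarith
qed

lemma lin_h1: "(a::real) / 2 \<le> q \<Longrightarrow> 0 \<le> a \<Longrightarrow> a \<le> 8 * q" by linarith
lemma lin_h2: "(q::real) \<le> 3/2 * a \<Longrightarrow> 0 \<le> a \<Longrightarrow> 8 * q \<le> 16 * a" by linarith

lemma norm_sq_pt: "(norm (w::pt))\<^sup>2 = (fst w)\<^sup>2 + (snd w)\<^sup>2"
  by (cases w) (simp add: norm_Pair)

lemma norm_le_rho: "norm w \<le> rho w"
proof -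
  have "(norm w)\<^sup>2 = (fst w)\<^sup>2 + (snd w)\<^sup>2" by (rule norm_sq_pt)
  also have "\<dots> \<le> 8 * Qf w" using Qf_ge_norm[of w] by (rule lin_h1) simp
  finally show ?thesis unfolding rho_def by (simp add: real_le_rsqrt)
qed

lemma rho_le_norm: "rho w \<le> 4 * norm w"
proof -
  have "8 * Qf w \<le> 16 * ((fst w)\<^sup>2 + (snd w)\<^sup>2)" using Qf_le_norm[of w] by (rule lin_h2) simp
  hence "8 * Qf w \<le> (4 * norm w)\<^sup>2"
    by (simp add: norm_sq_pt power_mult_distrib)
  thus ?thesis unfolding rho_def by (simp add: real_le_lsqrt)
qed

definition u :: "pt \<Rightarrow> real^3" where
  "u p = vector [tri (snd p), tri (fst p), tri (fst p + snd p)]"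

lemma u_comp: "u p $ 1 = tri (snd p)" "u p $ 2 = tri (fst p)" "u p $ 3 = tri (fst p + snd p)"
  by (simp_all add: u_def)

lemma norm3: "norm (z :: real^3) = sqrt ((z$1)\<^sup>2 + (z$2)\<^sup>2 + (z$3)\<^sup>2)"
  by (simp add: norm_eq_sqrt_inner inner_vec_def sum_3 power2_eq_square)

lemma dist3: "dist (z :: real^3) w = sqrt ((z$1 - w$1)\<^sup>2 + (z$2 - w$2)\<^sup>2 + (z$3 - w$3)\<^sup>2)"
  by (simp add: dist_norm norm3)

lemma sq_lip: "(tri s - tri t)\<^sup>2 \<le> 4 * (s - t)\<^sup>2"
proof -
  have "\<bar>tri s - tri t\<bar>\<^sup>2 \<le> (2 * \<bar>s - t\<bar>)\<^sup>2"
    using tri_lipschitz[of s t] by (intro power_mono) auto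
  thus ?thesis by (simp add: power_mult_distrib)
qed

lemma u_lip: "dist (u p) (u q) \<le> rho (p - q)"
proof -
  have t1: "(tri (snd p) - tri (snd q))\<^sup>2 \<le> 4 * (snd p - snd q)\<^sup>2"
    using sq_lip[of "snd p" "snd q"] by simp
  have t2: "(tri (fst p) - tri (fst q))\<^sup>2 \<le> 4 * (fst p - fst q)\<^sup>2"
    using sq_lip[of "fst p" "fst q"] by simp
  have t3: "(tri (fst p + snd p) - tri (fst q + snd q))\<^sup>2 \<le> 4 * ((fst p - fst q) + (snd p - snd q))\<^sup>2"
    using sq_lip[of "fst p + snd p" "fst q + snd q"] by (simp add: algebra_simps)
  have "4 * (snd p - snd q)\<^sup>2 + 4 * (fst p - fst q)\<^sup>2 + 4 * ((fst p - fst q) + (snd p - snd q))\<^sup>2 = 8 * Qf (p - q)"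
    by (simp add: Qf_def power2_eq_square algebra_simps)
  hence "(u p $ 1 - u q $ 1)\<^sup>2 + (u p $ 2 - u q $ 2)\<^sup>2 + (u p $ 3 - u q $ 3)\<^sup>2 \<le> 8 * Qf (p - q)"
    using t1 t2 t3 by (simp add: u_comp)
  thus ?thesis unfolding dist3 rho_def by simp
qed

lemma u_cont: "continuous_on S u"
proof (rule continuous_on_iff[THEN iffD2], intro ballI allI impI)
  fix x e assume "x \<in> S" "(0::real) < e"
  show "\<exists>d>0. \<forall>x'\<in>S. dist x' x < d \<longrightarrow> dist (u x') (u x) < e"
  proof (intro exI[of _ "e/4"] conjI ballI impI)
    show "e/4 > 0" using \<open>0 < e\<close> by simp
    fix y assume "y \<in> S" "dist y x < e / 4"
    have "dist (u y) (u x) \<le> rho (y - x)" by (rule u_lip)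
    also have "\<dots> \<le> 4 * norm (y - x)" by (rule rho_le_norm)
    also have "\<dots> < e" using \<open>dist y x < e / 4\<close> by (simp add: dist_norm)
    finally show "dist (u y) (u x) < e" .
  qed
qed

definition lift :: "real \<Rightarrow> int \<Rightarrow> int \<Rightarrow> pt \<Rightarrow> pt" where
  "lift e i j p = (e * fst p + 2 * of_int i, e * snd p + 2 * of_int j)"

lemma u_eqI:
  assumes "tri (snd q) = tri (snd p)" "tri (fst q) = tri (fst p)" "tri (fst q + snd q) = tri (fst p + snd p)"
  shows "u q = u p"
  using assms unfolding vec_eq_iff forall_3 by (simp add: u_comp)

lemma u_lift: "e = 1 \<or> e = -1 \<Longrightarrow> u (lift e i j p) = u p"
proof (rule u_eqI, goal_cases)
  case 1 thus ?case by (auto simp: lift_def tri_periodic tri_even)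
next
  case 2 thus ?case by (auto simp: lift_def tri_periodic tri_even)
next
  case 3
  have a: "fst (lift e i j p) + snd (lift e i j p) = e * (fst p + snd p) + 2 * of_int (i + j)"
    by (simp add: lift_def algebra_simps)
  have b: "tri (e * (fst p + snd p)) = tri (fst p + snd p)"
    using 3 tri_even[of "fst p + snd p"] by auto
  show ?case unfolding a tri_periodic b ..
qed

lemma fiber:
  assumes "u q = u p"
  shows "\<exists>e i j. (e = 1 \<or> e = -1) \<and> q = lift e i j p"
proof -
  have h1: "tri (fst q) = tri (fst p)" and h2: "tri (snd q) = tri (snd p)"
    and h3: "tri (fst q + snd q) = tri (fst p + snd p)"
    using assms unfolding vec_eq_iff forall_3 by (simp_all add: u_comp)
  obtain e1 k1 where k1: "e1 = 1 \<or> e1 = -1" "fst q = e1 * fst p + 2 * of_int k1" using tri_inj[OF h1] by blast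
  obtain e2 k2 where k2: "e2 = 1 \<or> e2 = -1" "snd q = e2 * snd p + 2 * of_int k2" using tri_inj[OF h2] by blast
  obtain e3 k3 where k3: "e3 = 1 \<or> e3 = -1" "fst q + snd q = e3 * (fst p + snd p) + 2 * of_int k3" using tri_inj[OF h3] by blast
  show ?thesis
  proof (cases "e1 = e2")
    case True
    hence "q = lift e1 k1 k2 p" using k1 k2 by (cases q) (simp add: lift_def)
    thus ?thesis using k1 by blast
  next
    case False
    hence e12: "(e1 = 1 \<and> e2 = -1) \<or> (e1 = -1 \<and> e2 = 1)" using k1 k2 by auto
    from e12 show ?thesis
    proof
      assume e: "e1 = 1 \<and> e2 = -1"
      show ?thesis
      proof (cases "e3 = 1")
        case True
        hence "snd p = of_int (k1 + k2 - k3)" using k1 k2 k3 e by (simp add: algebra_simps)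
        hence "q = lift 1 k1 (k2 - (k1 + k2 - k3)) p" using k1 k2 e
          by (cases q) (simp add: lift_def algebra_simps)
        thus ?thesis by blast
      next
        case False
        hence "e3 = -1" using k3 by simp
        hence "fst p = of_int (k3 - k1 - k2)" using k1 k2 k3 e by (simp add: algebra_simps)
        hence "q = lift (-1) (k1 + (k3 - k1 - k2)) k2 p" using k1 k2 e
          by (cases q) (simp add: lift_def algebra_simps)
        thus ?thesis by blast
      qed
    next
      assume e: "e1 = -1 \<and> e2 = 1"
      show ?thesis
      proof (cases "e3 = 1")
        case True
        hence "fst p = of_int (k1 + k2 - k3)" using k1 k2 k3 e by (simp add: algebra_simps)
        hence "q = lift 1 (k1 - (k1 + k2 - k3)) k2 p" using k1 k2 e
          by (cases q) (simp add: lift_def algebra_simps)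
        thus ?thesis by blast
      next
        case False
        hence "e3 = -1" using k3 by simp
        hence "snd p = of_int (k3 - k1 - k2)" using k1 k2 k3 e by (simp add: algebra_simps)
        hence "q = lift (-1) k1 (k2 + (k3 - k1 - k2)) p" using k1 k2 e
          by (cases q) (simp add: lift_def algebra_simps)
        thus ?thesis by blast
      qed
    qed
  qed
qed

lemma uD:
  assumes a: "0 \<le> a" "a \<le> 1" and b: "-1 \<le> b" "b \<le> 1"
  shows "u (a, b) \<in> Tset"
proof -
  have c1: "tri a = 1 - 2 * a" using a by (rule tri_01)
  consider "0 \<le> b" "a + b \<le> 1" | "0 \<le> b" "1 \<le> a + b" | "b \<le> 0" "0 \<le> a + b" | "b \<le> 0" "a + b \<le> 0"
    by linarith
  thus ?thesis
  proof cases
    case 1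
    have "tri b = 1 - 2 * b" "tri (a + b) = 1 - 2 * (a + b)" using 1 a b by (simp_all add: tri_01)
    thus ?thesis using 1 a b c1 unfolding Tset_def by (simp add: lamS u_comp)
  next
    case 2
    have "tri b = 1 - 2 * b" "tri (a + b) = 2 * (a + b) - 3" using 2 a b by (simp_all add: tri_01 tri_12)
    thus ?thesis using 2 a b c1 unfolding Tset_def by (simp add: lamS u_comp)
  next
    case 3
    have "tri b = 1 + 2 * b" "tri (a + b) = 1 - 2 * (a + b)" using 3 a b by (simp_all add: tri_01 tri_m10)
    thus ?thesis using 3 a b c1 unfolding Tset_def by (simp add: lamS u_comp)
  next
    case 4
    have "tri b = 1 + 2 * b" "tri (a + b) = 1 + 2 * (a + b)" using 4 a b by (simp_all add: tri_m10)
    thus ?thesis using 4 a b c1 unfolding Tset_def by (simp add: lamS u_comp)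
  qed
qed

lemma lift_pair: "lift e i j (a, b) = (e * a + 2 * of_int i, e * b + 2 * of_int j)"
  by (simp add: lift_def)

lemma u_in_T: "u p \<in> Tset"
proof -
  obtain m :: int where m: "\<bar>fst p - 2 * of_int m\<bar> \<le> 1" using tri_ex by blast
  obtain n :: int where n: "\<bar>snd p - 2 * of_int n\<bar> \<le> 1" using tri_ex by blast
  define a where "a = fst p - 2 * of_int m"
  define b where "b = snd p - 2 * of_int n"
  have up: "u p = u (a, b)"
  proof -
    have "(a, b) = lift 1 (- m) (- n) p" by (simp add: lift_def a_def b_def)
    thus ?thesis using u_lift[of 1 "- m" "- n" p] by simp
  qed
  show ?thesis
  proof (cases "0 \<le> a")
    case True thus ?thesis using up m n uD[of a b] by (simp add: a_def b_def abs_le_iff)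
  next
    case False
    have "u (a, b) = u (-a, -b)"
      using u_lift[of "-1" 0 0 "(a,b)"] by (simp add: lift_def)
    thus ?thesis using False up m n uD[of "-a" "-b"] by (simp add: a_def b_def abs_le_iff)
  qed
qed

definition A1 :: "real^3 \<Rightarrow> pt" where "A1 z = (lam 2 z + lam 4 z, lam 3 z + lam 4 z)"
definition A2 :: "real^3 \<Rightarrow> pt" where "A2 z = (2 * lam 1 z + lam 4 z + 2 * lam 3 z, lam 4 z + lam 3 z)"
definition A3 :: "real^3 \<Rightarrow> pt" where "A3 z = (lam 2 z + 2 * lam 1 z + lam 4 z, lam 4 z)"
definition A4 :: "real^3 \<Rightarrow> pt" where "A4 z = (lam 2 z, lam 3 z)"

lemma face_simps:
  "z \<in> face 1 \<longleftrightarrow> lam 1 z = 0 \<and> 0 \<le> lam 2 z \<and> 0 \<le> lam 3 z \<and> 0 \<le> lam 4 z"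
  "z \<in> face 2 \<longleftrightarrow> lam 2 z = 0 \<and> 0 \<le> lam 1 z \<and> 0 \<le> lam 3 z \<and> 0 \<le> lam 4 z"
  "z \<in> face 3 \<longleftrightarrow> lam 3 z = 0 \<and> 0 \<le> lam 1 z \<and> 0 \<le> lam 2 z \<and> 0 \<le> lam 4 z"
  "z \<in> face 4 \<longleftrightarrow> lam 4 z = 0 \<and> 0 \<le> lam 1 z \<and> 0 \<le> lam 2 z \<and> 0 \<le> lam 3 z"
  by (auto simp: face_def)

lemma face1': "z \<in> face (Suc 0) \<longleftrightarrow> lam 1 z = 0 \<and> 0 \<le> lam 2 z \<and> 0 \<le> lam 3 z \<and> 0 \<le> lam 4 z"
  using face_simps(1) by simp

lemmas faceS = face_simps face1'

lemma A1_spec: assumes "z \<in> face 1" shows "u (A1 z) = z"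
proof -
  have h: "lam 1 z = 0" "0 \<le> lam 2 z" "0 \<le> lam 3 z" "0 \<le> lam 4 z" using assms faceS by auto
  have s: "lam 1 z + lam 2 z + lam 3 z + lam 4 z = 1" by (rule lam_sum)
  have t1: "tri (lam 3 z + lam 4 z) = 1 - 2 * (lam 3 z + lam 4 z)" using h s by (intro tri_01) auto
  have t2: "tri (lam 2 z + lam 4 z) = 1 - 2 * (lam 2 z + lam 4 z)" using h s by (intro tri_01) auto
  have t3: "tri (lam 2 z + lam 4 z + (lam 3 z + lam 4 z)) = 2 * (lam 2 z + lam 4 z + (lam 3 z + lam 4 z)) - 3"
    using h s by (intro tri_12) auto
  show ?thesis unfolding vec_eq_iff forall_3 using t1 t2 t3 h
    by (simp add: u_comp A1_def lamS) (simp add: field_simps)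
qed

lemma A2_spec: assumes "z \<in> face 2" shows "u (A2 z) = z"
proof -
  have h: "lam 2 z = 0" "0 \<le> lam 1 z" "0 \<le> lam 3 z" "0 \<le> lam 4 z" using assms face_simps(2) by auto
  have s: "lam 1 z + lam 2 z + lam 3 z + lam 4 z = 1" by (rule lam_sum)
  have t1: "tri (lam 4 z + lam 3 z) = 1 - 2 * (lam 4 z + lam 3 z)" using h s by (intro tri_01) auto
  have t2: "tri (2 * lam 1 z + lam 4 z + 2 * lam 3 z) = 2 * (2 * lam 1 z + lam 4 z + 2 * lam 3 z) - 3"
    using h s by (intro tri_12) auto
  have t3: "tri (2 * lam 1 z + lam 4 z + 2 * lam 3 z + (lam 4 z + lam 3 z)) = 1 - 2 * ((2 * lam 1 z + lam 4 z + 2 * lam 3 z + (lam 4 z + lam 3 z)) - 2)"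
    using h s by (intro tri_23) auto
  show ?thesis unfolding vec_eq_iff forall_3 using t1 t2 t3 h
    by (simp add: u_comp A2_def lamS) (simp add: field_simps)
qed

lemma A3_spec: assumes "z \<in> face 3" shows "u (A3 z) = z"
proof -
  have h: "lam 3 z = 0" "0 \<le> lam 1 z" "0 \<le> lam 2 z" "0 \<le> lam 4 z" using assms face_simps(3) by auto
  have s: "lam 1 z + lam 2 z + lam 3 z + lam 4 z = 1" by (rule lam_sum)
  have t1: "tri (lam 4 z) = 1 - 2 * (lam 4 z)" using h s by (intro tri_01) auto
  have t2: "tri (lam 2 z + 2 * lam 1 z + lam 4 z) = 2 * (lam 2 z + 2 * lam 1 z + lam 4 z) - 3"
    using h s by (intro tri_12) auto
  have t3: "tri (lam 2 z + 2 * lam 1 z + lam 4 z + lam 4 z) = 2 * (lam 2 z + 2 * lam 1 z + lam 4 z + lam 4 z) - 3"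
    using h s by (intro tri_12) auto
  show ?thesis unfolding vec_eq_iff forall_3 using t1 t2 t3 h
    by (simp add: u_comp A3_def lamS) (simp add: field_simps)
qed

lemma A4_spec: assumes "z \<in> face 4" shows "u (A4 z) = z"
proof -
  have h: "lam 4 z = 0" "0 \<le> lam 1 z" "0 \<le> lam 2 z" "0 \<le> lam 3 z" using assms face_simps(4) by auto
  have s: "lam 1 z + lam 2 z + lam 3 z + lam 4 z = 1" by (rule lam_sum)
  have t1: "tri (lam 3 z) = 1 - 2 * (lam 3 z)" using h s by (intro tri_01) auto
  have t2: "tri (lam 2 z) = 1 - 2 * (lam 2 z)" using h s by (intro tri_01) auto
  have t3: "tri (lam 2 z + lam 3 z) = 1 - 2 * (lam 2 z + lam 3 z)"
    using h s by (intro tri_01) auto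
  show ?thesis unfolding vec_eq_iff forall_3 using t1 t2 t3 h
    by (simp add: u_comp A4_def lamS) (simp add: field_simps)
qed

lemma iso_gen:
  fixes z w :: "real^3"
  assumes "8 * Qf (p - q) = (z$1 - w$1)\<^sup>2 + (z$2 - w$2)\<^sup>2 + (z$3 - w$3)\<^sup>2"
  shows "rho (p - q) = dist z w"
  unfolding rho_def dist3 assms ..

lemma A1_iso: assumes "z \<in> face 1" "w \<in> face 1" shows "rho (A1 z - A1 w) = dist z w"
proof (rule iso_gen)
  have e: "z$3 = -1 - z$1 - z$2" "w$3 = -1 - w$1 - w$2" using assms by (auto simp: faceS lamS)
  show "8 * Qf (A1 z - A1 w) = (z$1 - w$1)\<^sup>2 + (z$2 - w$2)\<^sup>2 + (z$3 - w$3)\<^sup>2"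
    apply (simp only: A1_def lamS)
    apply (simp only: e)
    apply (simp add: Qf_def power2_eq_square field_simps)
    done
qed

lemma A2_iso: assumes "z \<in> face 2" "w \<in> face 2" shows "rho (A2 z - A2 w) = dist z w"
proof (rule iso_gen)
  have e: "z$3 = 1 + z$1 - z$2" "w$3 = 1 + w$1 - w$2" using assms by (auto simp: faceS lamS)
  show "8 * Qf (A2 z - A2 w) = (z$1 - w$1)\<^sup>2 + (z$2 - w$2)\<^sup>2 + (z$3 - w$3)\<^sup>2"
    apply (simp only: A2_def lamS)
    apply (simp only: e)
    apply (simp add: Qf_def power2_eq_square field_simps)
    done
qed

lemma A3_iso: assumes "z \<in> face 3" "w \<in> face 3" shows "rho (A3 z - A3 w) = dist z w"
proof (rule iso_gen)
  have e: "z$3 = 1 - z$1 + z$2" "w$3 = 1 - w$1 + w$2" using assms by (auto simp: faceS lamS)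
  show "8 * Qf (A3 z - A3 w) = (z$1 - w$1)\<^sup>2 + (z$2 - w$2)\<^sup>2 + (z$3 - w$3)\<^sup>2"
    apply (simp only: A3_def lamS)
    apply (simp only: e)
    apply (simp add: Qf_def power2_eq_square field_simps)
    done
qed

lemma A4_iso: assumes "z \<in> face 4" "w \<in> face 4" shows "rho (A4 z - A4 w) = dist z w"
proof (rule iso_gen)
  have e: "z$3 = -1 + z$1 + z$2" "w$3 = -1 + w$1 + w$2" using assms by (auto simp: faceS lamS)
  show "8 * Qf (A4 z - A4 w) = (z$1 - w$1)\<^sup>2 + (z$2 - w$2)\<^sup>2 + (z$3 - w$3)\<^sup>2"
    apply (simp only: A4_def lamS)
    apply (simp only: e)
    apply (simp add: Qf_def power2_eq_square field_simps)
    done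
qed

definition Af :: "nat \<Rightarrow> real^3 \<Rightarrow> pt" where
  "Af k = (if k = 1 then A1 else if k = 2 then A2 else if k = 3 then A3 else A4)"

lemma Af_spec: "k \<in> {1,2,3,4} \<Longrightarrow> z \<in> face k \<Longrightarrow> u (Af k z) = z"
  by (auto simp: Af_def A1_spec A2_spec A3_spec A4_spec)

lemma Af_iso: "k \<in> {1,2,3,4} \<Longrightarrow> z \<in> face k \<Longrightarrow> w \<in> face k \<Longrightarrow> rho (Af k z - Af k w) = dist z w"
  by (auto simp: Af_def A1_iso A2_iso A3_iso A4_iso)

lemma Tset_range: "Tset = range u"
proof
  show "Tset \<subseteq> range u"
  proof
    fix z assume "z \<in> Tset"
    then obtain k where k: "k \<in> {1,2,3,4}" "z \<in> face k" unfolding Tset_faces by blast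
    show "z \<in> range u" using Af_spec[OF k] by (metis rangeI)
  qed
qed (auto simp: u_in_T)

lemma T_range: "tet_surface = range u"
  using Tset_range tet_surface_eq by simp

lemma local_face:
  assumes "p \<in> Tset"
  shows "\<exists>r>0. \<forall>w\<in>Tset. dist w p < r \<longrightarrow> (\<exists>k\<in>{1,2,3,4}. p \<in> face k \<and> w \<in> face k)"
proof -
  have ex: "\<exists>r>0. p \<notin> face k \<longrightarrow> (\<forall>w. dist w p < r \<longrightarrow> w \<notin> face k)" for k
  proof (cases "p \<in> face k")
    case True thus ?thesis by (intro exI[of _ 1]) auto
  next
    case False
    have "open (- face k)" using closed_face by (simp add: open_Compl)
    then obtain r where "r > 0" "\<forall>w. dist w p < r \<longrightarrow> w \<in> - face k"
      using False unfolding open_dist by (metis ComplI dist_commute)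
    thus ?thesis by auto
  qed
  obtain r1 where r1: "r1 > 0" "p \<notin> face 1 \<longrightarrow> (\<forall>w. dist w p < r1 \<longrightarrow> w \<notin> face 1)" using ex by blast
  obtain r2 where r2: "r2 > 0" "p \<notin> face 2 \<longrightarrow> (\<forall>w. dist w p < r2 \<longrightarrow> w \<notin> face 2)" using ex by blast
  obtain r3 where r3: "r3 > 0" "p \<notin> face 3 \<longrightarrow> (\<forall>w. dist w p < r3 \<longrightarrow> w \<notin> face 3)" using ex by blast
  obtain r4 where r4: "r4 > 0" "p \<notin> face 4 \<longrightarrow> (\<forall>w. dist w p < r4 \<longrightarrow> w \<notin> face 4)" using ex by blast
  define r where "r = min (min r1 r2) (min r3 r4)"
  have "r > 0" using r1 r2 r3 r4 by (simp add: r_def)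
  moreover have "\<forall>w\<in>Tset. dist w p < r \<longrightarrow> (\<exists>k\<in>{1,2,3,4}. p \<in> face k \<and> w \<in> face k)"
  proof (intro ballI impI)
    fix w assume w: "w \<in> Tset" "dist w p < r"
    show "\<exists>k\<in>{1,2,3,4}. p \<in> face k \<and> w \<in> face k"
      using w r1 r2 r3 r4 unfolding Tset_faces r_def by auto
  qed
  ultimately show ?thesis by blast
qed

fun psum :: "('a \<Rightarrow> 'a \<Rightarrow> real) \<Rightarrow> (real \<Rightarrow> 'a) \<Rightarrow> real list \<Rightarrow> real" where
  "psum d g (a # b # rest) = d (g a) (g b) + psum d g (b # rest)"
| "psum d g _ = 0"

lemma psum_eq: "(\<Sum>i<length ts - 1. d (g (ts ! i)) (g (ts ! Suc i))) = psum d g ts"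
proof (induction d g ts rule: psum.induct)
  case (1 d g a b rest)
  have "(\<Sum>i<length (a # b # rest) - 1. d (g ((a # b # rest) ! i)) (g ((a # b # rest) ! Suc i)))
      = (\<Sum>i<Suc (length rest). d (g ((a # b # rest) ! i)) (g ((a # b # rest) ! Suc i)))" by simp
  also have "\<dots> = d (g a) (g b) + (\<Sum>i<length rest. d (g ((b # rest) ! i)) (g ((b # rest) ! Suc i)))"
    by (subst sum.lessThan_Suc_shift) simp
  also have "(\<Sum>i<length rest. d (g ((b # rest) ! i)) (g ((b # rest) ! Suc i))) = psum d g (b # rest)"
    using 1 by simp
  finally show ?case by simp
qed auto

lemma path_len_ge:
  assumes "ts \<noteq> []" "sorted ts" "hd ts = 0" "last ts = 1"
  shows "ereal (psum d g ts) \<le> path_len d g"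
  unfolding path_len_def psum_eq[symmetric]
  by (rule SUP_upper) (use assms in auto)

lemma psum_snoc: "ts \<noteq> [] \<Longrightarrow> psum d g (ts @ [x]) = psum d g ts + d (g (last ts)) (g x)"
  by (induction d g ts rule: psum.induct) auto

lemma sorted_le_last: "sorted ts \<Longrightarrow> ts \<noteq> [] \<Longrightarrow> z \<in> set ts \<Longrightarrow> z \<le> last ts"
proof (induction ts arbitrary: z)
  case (Cons a ts) thus ?case by (cases ts) auto
qed simp

lemma sorted_snoc: "sorted ts \<Longrightarrow> ts \<noteq> [] \<Longrightarrow> last ts \<le> x \<Longrightarrow> sorted (ts @ [x])"
  using sorted_le_last by (fastforce simp: sorted_append)

lemma chain_bound:
  fixes f :: "real \<Rightarrow> real" and c :: "real \<Rightarrow> 'a" and D :: "'a \<Rightarrow> 'a \<Rightarrow> real"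
  assumes loc: "\<And>t. t \<in> {0..1} \<Longrightarrow> \<exists>\<eta>>0. \<forall>s\<in>{0..1}. \<bar>s - t\<bar> < \<eta> \<longrightarrow>
       f s - f t \<le> D (c t) (c s) \<and> f t - f s \<le> D (c s) (c t)"
  shows "\<exists>ts. ts \<noteq> [] \<and> sorted ts \<and> hd ts = 0 \<and> last ts = 1 \<and> f 1 - f 0 \<le> psum D c ts"
proof -
  define A where "A = {x \<in> {0..1}. \<exists>ts. ts \<noteq> [] \<and> sorted ts \<and> hd ts = 0 \<and> last ts = x \<and> f x - f 0 \<le> psum D c ts}"
  have ext: "x \<in> A" if y: "y \<in> A" and xy: "y \<le> x" "x \<le> 1" and step: "f x - f y \<le> D (c y) (c x)" for x y
  proof -
    from y obtain ts where ts: "ts \<noteq> []" "sorted ts" "hd ts = 0" "last ts = y" "f y - f 0 \<le> psum D c ts"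
      and y01: "y \<in> {0..1}" unfolding A_def by blast
    have "sorted (ts @ [x])" by (rule sorted_snoc) (use ts xy in auto)
    moreover have "psum D c (ts @ [x]) = psum D c ts + D (c y) (c x)" using psum_snoc[OF ts(1)] ts(4) by simp
    ultimately show ?thesis unfolding A_def using ts xy y01 step
      by (intro CollectI conjI exI[of _ "ts @ [x]"]) auto
  qed
  have A0: "0 \<in> A" unfolding A_def by (intro CollectI conjI exI[of _ "[0]"]) auto
  have Ab: "bdd_above A" unfolding A_def by (intro bdd_aboveI[of _ 1]) auto
  define s where "s = Sup A"
  have s0: "0 \<le> s" using A0 Ab unfolding s_def by (rule cSup_upper)
  have s1: "s \<le> 1" unfolding s_def
  proof (rule cSup_least)
    show "A \<noteq> {}" using A0 by blast
  qed (auto simp: A_def)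
  obtain \<eta> where eta: "\<eta> > 0" "\<forall>r\<in>{0..1}. \<bar>r - s\<bar> < \<eta> \<longrightarrow> f r - f s \<le> D (c s) (c r) \<and> f s - f r \<le> D (c r) (c s)"
    using loc[of s] s0 s1 by auto
  have "s - \<eta> < Sup A" using eta s_def by simp
  then obtain y where y: "y \<in> A" "s - \<eta> < y" using A0 Ab less_cSup_iff[of A "s - \<eta>"] by blast
  have ys: "y \<le> s" using y Ab unfolding s_def by (simp add: cSup_upper)
  have y01: "y \<in> {0..1}" using y unfolding A_def by blast
  have sA: "s \<in> A"
    using ext[OF y(1) ys s1] eta y ys y01 by (simp add: abs_if)
  have "s = 1"
  proof (rule ccontr)
    assume "s \<noteq> 1" hence sl: "s < 1" using s1 by simp
    define x where "x = min 1 (s + \<eta>/2)"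
    have x: "s < x" "x \<le> 1" using sl eta by (auto simp: x_def)
    have "x \<in> {0..1}" "\<bar>x - s\<bar> < \<eta>" using x eta s0 by (auto simp: x_def)
    hence "f x - f s \<le> D (c s) (c x)" using eta(2) by blast
    hence "x \<in> A"
      using ext[OF sA] x by auto
    hence "x \<le> s" unfolding s_def using Ab by (rule cSup_upper)
    thus False using x by simp
  qed
  thus ?thesis using sA unfolding A_def by auto
qed

definition Gf :: "pt \<Rightarrow> real^3 \<Rightarrow> real" where
  "Gf a z = Inf {rho (a - q) | q. u q = z}"

lemma Gf_lower: assumes "u q = z" shows "Gf a z \<le> rho (a - q)"
  unfolding Gf_def
proof (rule cInf_lower)
  show "rho (a - q) \<in> {rho (a - q) |q. u q = z}" using assms by blast
  show "bdd_below {rho (a - q) |q. u q = z}" by (rule bdd_belowI[of _ 0]) (auto simp: rho_nonneg)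
qed

lemma Gf_greatest: assumes "u q = z" "\<And>q. u q = z \<Longrightarrow> m \<le> rho (a - q)" shows "m \<le> Gf a z"
  unfolding Gf_def
proof (rule cInf_greatest)
  show "{rho (a - q) |q. u q = z} \<noteq> {}" using assms(1) by blast
qed (use assms(2) in blast)

lemma Gf_self: "Gf a (u a) = 0"
proof -
  have "Gf a (u a) \<le> rho (a - a)" by (rule Gf_lower) simp
  moreover have "0 \<le> Gf a (u a)" by (rule Gf_greatest[of a]) (auto simp: rho_nonneg)
  ultimately show ?thesis by (simp add: rho_zero)
qed

lemma face_sub: "k \<in> {1,2,3,4} \<Longrightarrow> face k \<subseteq> Tset"
  unfolding Tset_faces by auto

lemma Gf_face:
  assumes k: "k \<in> {1,2,3,4}" and z: "z \<in> face k" and w: "w \<in> face k"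
  shows "Gf a w \<le> Gf a z + dist z w"
proof -
  have zu: "u (Af k z) = z" using Af_spec[OF k z] .
  have wu: "u (Af k w) = w" using Af_spec[OF k w] .
  have "Gf a w - dist z w \<le> Gf a z"
  proof (rule Gf_greatest[OF zu])
    fix q assume q: "u q = z"
    then obtain e i j where e: "e = 1 \<or> e = -1" "q = lift e i j (Af k z)"
      using fiber[of q "Af k z"] zu by auto
    define q' where "q' = lift e i j (Af k w)"
    have uq': "u q' = w" unfolding q'_def using u_lift[OF e(1)] wu by simp
    have "q - q' = e *\<^sub>R (Af k z - Af k w)"
      unfolding e(2) q'_def lift_def by (simp add: algebra_simps prod_eq_iff)
    hence "rho (q - q') = dist z w" using e(1) Af_iso[OF k z w] by (auto simp: rho_scale)
    moreover have "rho (a - q') \<le> rho (a - q) + rho (q - q')" by (rule rho_tri3)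
    moreover have "Gf a w \<le> rho (a - q')" using uq' by (rule Gf_lower)
    ultimately show "Gf a w - dist z w \<le> rho (a - q)" by linarith
  qed
  thus ?thesis by linarith
qed

lemma G_path:
  assumes pg: "path g" and img: "path_image g \<subseteq> Tset"
  shows "ereal (Gf a (g 1) - Gf a (g 0)) \<le> path_len dist g"
proof -
  have "\<exists>ts. ts \<noteq> [] \<and> sorted ts \<and> hd ts = 0 \<and> last ts = 1 \<and> Gf a (g 1) - Gf a (g 0) \<le> psum dist g ts"
  proof (rule chain_bound)
    fix t :: real assume t: "t \<in> {0..1}"
    have gt: "g t \<in> Tset" using img t by (auto simp: path_image_def)
    obtain r where r: "r > 0" "\<forall>w\<in>Tset. dist w (g t) < r \<longrightarrow> (\<exists>k\<in>{1,2,3,4}. g t \<in> face k \<and> w \<in> face k)"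
      using local_face[OF gt] by blast
    have "continuous_on {0..1} g" using pg by (simp add: path_def)
    then obtain \<eta> where eta: "\<eta> > 0" "\<forall>s\<in>{0..1}. dist s t < \<eta> \<longrightarrow> dist (g s) (g t) < r"
      using t r(1) unfolding continuous_on_iff by blast
    show "\<exists>\<eta>>0. \<forall>s\<in>{0..1}. \<bar>s - t\<bar> < \<eta> \<longrightarrow>
       Gf a (g s) - Gf a (g t) \<le> dist (g t) (g s) \<and> Gf a (g t) - Gf a (g s) \<le> dist (g s) (g t)"
    proof (intro exI[of _ \<eta>] conjI ballI impI)
      show "\<eta> > 0" using eta by simp
      fix s :: real assume s: "s \<in> {0..1}" "\<bar>s - t\<bar> < \<eta>"
      have gs: "g s \<in> Tset" using img s by (auto simp: path_image_def)
      have "dist (g s) (g t) < r" using eta s by (simp add: dist_real_def)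
      then obtain k where k: "k \<in> {1,2,3,4}" "g t \<in> face k" "g s \<in> face k" using r gs by blast
      show "Gf a (g s) - Gf a (g t) \<le> dist (g t) (g s)" using Gf_face[OF k(1) k(2) k(3), of a] by linarith
      show "Gf a (g t) - Gf a (g s) \<le> dist (g s) (g t)" using Gf_face[OF k(1) k(3) k(2), of a] by linarith
    qed
  qed
  then obtain ts where ts: "ts \<noteq> []" "sorted ts" "hd ts = 0" "last ts = 1" "Gf a (g 1) - Gf a (g 0) \<le> psum dist g ts"
    by blast
  have "ereal (Gf a (g 1) - Gf a (g 0)) \<le> ereal (psum dist g ts)" using ts by simp
  also have "\<dots> \<le> path_len dist g" using path_len_ge[OF ts(1-4)] .
  finally show ?thesis .
qed

lemma rho_cont: "continuous_on S (\<lambda>q. rho (a - q))"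
proof (rule continuous_on_iff[THEN iffD2], intro ballI allI impI)
  fix x e assume "x \<in> S" "(0::real) < e"
  show "\<exists>d>0. \<forall>x'\<in>S. dist x' x < d \<longrightarrow> dist (rho (a - x')) (rho (a - x)) < e"
  proof (intro exI[of _ "e/4"] conjI ballI impI)
    show "e/4 > 0" using \<open>0 < e\<close> by simp
    fix y assume "y \<in> S" "dist y x < e / 4"
    have "rho (a - y) \<le> rho (a - x) + rho (x - y)" by (rule rho_tri3)
    moreover have "rho (a - x) \<le> rho (a - y) + rho (y - x)" by (rule rho_tri3)
    moreover have "rho (x - y) = rho (y - x)" by (rule rho_commute)
    moreover have "rho (y - x) \<le> 4 * norm (y - x)" by (rule rho_le_norm)
    moreover have "4 * norm (y - x) < e" using \<open>dist y x < e / 4\<close> by (simp add: dist_norm)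
    ultimately show "dist (rho (a - y)) (rho (a - x)) < e" by (simp add: dist_real_def abs_if)
  qed
qed

lemma G_attain: "\<exists>q0. u q0 = u b \<and> (\<forall>q. u q = u b \<longrightarrow> rho (a - q0) \<le> rho (a - q))"
proof -
  define S where "S = {q. u q = u b} \<inter> cball a (rho (a - b))"
  have "closed {q. u q = u b}"
    by (intro closed_Collect_eq u_cont continuous_on_const)
  hence cS: "compact S" unfolding S_def by (simp add: compact_Int_closed Int_commute)
  have bS: "b \<in> S" unfolding S_def using norm_le_rho[of "a - b"] by (simp add: dist_norm)
  obtain q0 where q0: "q0 \<in> S" "\<forall>y\<in>S. rho (a - q0) \<le> rho (a - y)"
    using continuous_attains_inf[OF cS _ rho_cont] bS by blast
  have "\<forall>q. u q = u b \<longrightarrow> rho (a - q0) \<le> rho (a - q)"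
  proof (intro allI impI)
    fix q assume q: "u q = u b"
    show "rho (a - q0) \<le> rho (a - q)"
    proof (cases "q \<in> S")
      case True thus ?thesis using q0 by blast
    next
      case False
      hence "norm (a - q) > rho (a - b)" using q unfolding S_def by (auto simp: dist_norm)
      moreover have "norm (a - q) \<le> rho (a - q)" by (rule norm_le_rho)
      moreover have "rho (a - q0) \<le> rho (a - b)" using q0 bS by blast
      ultimately show ?thesis by linarith
    qed
  qed
  thus ?thesis using q0 unfolding S_def by blast
qed

lemma psum_line:
  "sorted ts \<Longrightarrow> ts \<noteq> [] \<Longrightarrow> psum dist (\<lambda>t. u (linepath a b t)) ts \<le> (last ts - hd ts) * rho (b - a)"
proof (induction "dist :: real^3 \<Rightarrow> _" "\<lambda>t. u (linepath a b t)" ts rule: psum.induct)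
  case (1 x y rest)
  have xy: "x \<le> y" using 1(2) by simp
  have "linepath a b x - linepath a b y = (x - y) *\<^sub>R (b - a)"
    by (simp add: linepath_def algebra_simps)
  hence "dist (u (linepath a b x)) (u (linepath a b y)) \<le> (y - x) * rho (b - a)"
    using u_lip[of "linepath a b x" "linepath a b y"] xy by (simp add: rho_scale)
  moreover have "psum dist (\<lambda>t. u (linepath a b t)) (y # rest) \<le> (last (y # rest) - y) * rho (b - a)"
    using 1 by simp
  ultimately show ?case by (simp add: algebra_simps)
qed auto

lemma path_len_line: "path_len dist (\<lambda>t. u (linepath a b t)) \<le> ereal (rho (b - a))"
  unfolding path_len_def
proof (rule SUP_least)
  fix ts :: "real list" assume "ts \<in> {ts. ts \<noteq> [] \<and> sorted ts \<and> hd ts = 0 \<and> last ts = 1}"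
  hence ts: "ts \<noteq> []" "sorted ts" "hd ts = 0" "last ts = 1" by auto
  show "ereal (\<Sum>i<length ts - 1. dist (u (linepath a b (ts ! i))) (u (linepath a b (ts ! Suc i)))) \<le> ereal (rho (b - a))"
    using psum_eq[of dist "\<lambda>t. u (linepath a b t)" ts] psum_line[OF ts(2) ts(1), of a b] ts by simp
qed

lemma tet_dist_eq:
  assumes q0: "u q0 = u b" "\<forall>q. u q = u b \<longrightarrow> rho (a - q0) \<le> rho (a - q)"
  shows "tet_dist (u a) (u b) = rho (a - q0)"
proof -
  let ?S = "{g. path g \<and> path_image g \<subseteq> tet_surface \<and> pathstart g = u a \<and> pathfinish g = u b}"
  have G: "Gf a (u b) = rho (a - q0)"
  proof (rule antisym)
    show "Gf a (u b) \<le> rho (a - q0)" using q0(1) by (rule Gf_lower)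
    show "rho (a - q0) \<le> Gf a (u b)" using q0 by (intro Gf_greatest[OF q0(1)]) auto
  qed
  define g0 where "g0 = (\<lambda>t. u (linepath a q0 t))"
  have g0S: "g0 \<in> ?S"
  proof -
    have "continuous_on {0..1} (linepath a q0)" using path_linepath unfolding path_def .
    hence "path g0" unfolding g0_def path_def
      by (rule continuous_on_compose2[OF u_cont[of UNIV]]) auto
    moreover have "path_image g0 \<subseteq> tet_surface" unfolding path_image_def g0_def T_range by auto
    moreover have "pathstart g0 = u a" "pathfinish g0 = u b"
      using q0(1) by (simp_all add: g0_def pathstart_def pathfinish_def linepath_def)
    ultimately show ?thesis by blast
  qed
  have "(INF g\<in>?S. path_len dist g) = ereal (rho (a - q0))"
  proof (rule antisym)
    have "(INF g\<in>?S. path_len dist g) \<le> path_len dist g0" using g0S by (rule INF_lower)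
    also have "\<dots> \<le> ereal (rho (q0 - a))" unfolding g0_def by (rule path_len_line)
    finally show "(INF g\<in>?S. path_len dist g) \<le> ereal (rho (a - q0))" by (simp add: rho_commute)
  next
    show "ereal (rho (a - q0)) \<le> (INF g\<in>?S. path_len dist g)"
    proof (rule INF_greatest)
      fix g assume g: "g \<in> ?S"
      have "ereal (Gf a (g 1) - Gf a (g 0)) \<le> path_len dist g"
        using g by (intro G_path) (auto simp: tet_surface_eq)
      moreover have "g 0 = u a" "g 1 = u b" using g by (auto simp: pathstart_def pathfinish_def)
      ultimately show "ereal (rho (a - q0)) \<le> path_len dist g" using G by (simp add: Gf_self)
    qed
  qed
  thus ?thesis unfolding tet_dist_def by simp
qed

abbreviation td where "td \<equiv> tet_dist"

lemma td_min: "\<exists>q0. u q0 = u b \<and> (\<forall>q. u q = u b \<longrightarrow> rho (a - q0) \<le> rho (a - q)) \<and> td (u a) (u b) = rho (a - q0)"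
  using G_attain[of b a] tet_dist_eq by blast

lemma td_le: assumes "u q = u b" shows "td (u a) (u b) \<le> rho (a - q)"
proof -
  obtain q0 where q0: "u q0 = u b" "\<forall>q. u q = u b \<longrightarrow> rho (a - q0) \<le> rho (a - q)" "td (u a) (u b) = rho (a - q0)"
    using td_min[of b a] by blast
  have "rho (a - q0) \<le> rho (a - q)" using q0(2) assms by blast
  thus ?thesis using q0(3) by simp
qed

lemma td_le_rho: "td (u a) (u b) \<le> rho (a - b)"
  by (rule td_le) simp

lemma td_ge: assumes "\<And>q. u q = u b \<Longrightarrow> m \<le> rho (a - q)" shows "m \<le> td (u a) (u b)"
proof -
  obtain q0 where "u q0 = u b" "td (u a) (u b) = rho (a - q0)"
    using td_min[of b a] by blast
  thus ?thesis using assms by simp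
qed

lemma td_nonneg: "0 \<le> td (u a) (u b)"
  by (rule td_ge) (simp add: rho_nonneg)

lemma td_self: "td (u a) (u a) = 0"
  using td_le[of a a a] td_nonneg[of a a] by (simp add: rho_zero)

lemma td_sym_le: "td (u b) (u a) \<le> td (u a) (u b)"
proof -
  obtain q0 where q0: "u q0 = u b" "td (u a) (u b) = rho (a - q0)" using td_min[of b a] by blast
  obtain e i j where e: "e = 1 \<or> e = -1" "q0 = lift e i j b" using fiber[OF q0(1)] by blast
  show ?thesis
  proof (cases "e = 1")
    case True
    have "u (lift 1 (- i) (- j) a) = u a" by (rule u_lift) simp
    hence "td (u b) (u a) \<le> rho (b - lift 1 (- i) (- j) a)" by (rule td_le)
    also have "b - lift 1 (- i) (- j) a = - (a - q0)" using e True by (simp add: lift_def prod_eq_iff)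
    finally show ?thesis using q0 by (simp add: rho_minus rho_commute)
  next
    case False
    hence em: "e = -1" using e by simp
    have "u (lift (-1) i j a) = u a" by (rule u_lift) simp
    hence "td (u b) (u a) \<le> rho (b - lift (-1) i j a)" by (rule td_le)
    also have "b - lift (-1) i j a = (a - q0)" using e em by (simp add: lift_def prod_eq_iff)
    finally show ?thesis using q0 by simp
  qed
qed

lemma td_sym: "td (u a) (u b) = td (u b) (u a)"
  using td_sym_le[of a b] td_sym_le[of b a] by simp

lemma td_tri: "td (u a) (u c) \<le> td (u a) (u b) + td (u b) (u c)"
proof -
  obtain qb where qb: "u qb = u b" "td (u a) (u b) = rho (a - qb)" using td_min[of b a] by blast
  obtain qc where qc: "u qc = u c" "td (u qb) (u c) = rho (qb - qc)" using td_min[of c qb] by blast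
  have "td (u a) (u c) \<le> rho (a - qc)" using qc(1) by (rule td_le)
  also have "\<dots> \<le> rho (a - qb) + rho (qb - qc)" by (rule rho_tri3)
  finally show ?thesis using qb qc by simp
qed

lemma T_ex: assumes "x \<in> tet_surface" shows "\<exists>a. x = u a"
proof -
  have "x \<in> range u" using assms T_range by simp
  thus ?thesis by blast
qed

lemma tdT_sym: "x \<in> tet_surface \<Longrightarrow> y \<in> tet_surface \<Longrightarrow> td x y = td y x"
  using T_ex td_sym by metis

lemma tdT_tri: "x \<in> tet_surface \<Longrightarrow> y \<in> tet_surface \<Longrightarrow> z \<in> tet_surface \<Longrightarrow> td x z \<le> td x y + td y z"
  using T_ex td_tri by metis

lemma tdT_nonneg: "x \<in> tet_surface \<Longrightarrow> y \<in> tet_surface \<Longrightarrow> 0 \<le> td x y"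
  using T_ex td_nonneg by metis

lemma tdT_self: "x \<in> tet_surface \<Longrightarrow> td x x = 0"
  using T_ex td_self by metis

lemma geo_sum:
  assumes c: "min_geodesic tet_surface td x y c" and t: "t \<in> {0..1}"
  shows "td x (c t) + td (c t) y \<le> td x y"
proof -
  have "ereal (psum td c [0, t, 1]) \<le> path_len td c"
    by (rule path_len_ge) (use t in auto)
  moreover have "path_len td c = ereal (td x y)" and "c 0 = x" and "c 1 = y"
    using c by (auto simp: min_geodesic_def)
  ultimately show ?thesis by simp
qed

lemma between_Em:
  assumes "rho (a - w) + rho (w - q) = rho (a - q)"
  shows "\<exists>l. 0 \<le> l \<and> l \<le> 1 \<and> w = (1 - l) *\<^sub>R a + l *\<^sub>R q"
proof -
  have "dist (Em a) (Em q) = dist (Em a) (Em w) + dist (Em w) (Em q)"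
    using assms by (simp add: rho_Em Em_diff dist_norm)
  hence "between (Em a, Em q) (Em w)" by (simp add: between)
  hence "Em w \<in> closed_segment (Em a) (Em q)" by (simp add: between_mem_segment)
  then obtain l where l: "0 \<le> l" "l \<le> 1" "Em w = (1 - l) *\<^sub>R Em a + l *\<^sub>R Em q"
    unfolding closed_segment_def by blast
  hence "Em w = Em ((1 - l) *\<^sub>R a + l *\<^sub>R q)" by (simp add: Em_add Em_scale)
  hence "w = (1 - l) *\<^sub>R a + l *\<^sub>R q" by (rule Em_inj)
  thus ?thesis using l by blast
qed

lemma geo_point:
  assumes c: "min_geodesic tet_surface td (u a) (u b) c" and t: "t \<in> {0..1}"
  shows "\<exists>q l. u q = u b \<and> rho (a - q) = td (u a) (u b) \<and> 0 \<le> l \<and> l \<le> 1 \<and>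
           c t = u ((1 - l) *\<^sub>R a + l *\<^sub>R q) \<and> td (u a) (c t) = l * td (u a) (u b)"
proof -
  have "c t \<in> tet_surface" using c t by (auto simp: min_geodesic_def mpath_def)
  then obtain z where z: "c t = u z" using T_ex by blast
  obtain w where w: "u w = u z" "td (u a) (u z) = rho (a - w)" using td_min[of z a] by blast
  obtain q where q: "u q = u b" "td (u w) (u b) = rho (w - q)" using td_min[of b w] by blast
  have sum: "td (u a) (u z) + td (u z) (u b) \<le> td (u a) (u b)" using geo_sum[OF c t] z by simp
  have D1: "td (u a) (u b) \<le> rho (a - q)" using q(1) by (rule td_le)
  have D2: "rho (a - q) \<le> rho (a - w) + rho (w - q)" by (rule rho_tri3)
  have eq1: "rho (a - q) = td (u a) (u b)" using sum D1 D2 w q by simp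
  have eq2: "rho (a - w) + rho (w - q) = rho (a - q)" using sum D1 D2 w q by simp
  obtain l where l: "0 \<le> l" "l \<le> 1" "w = (1 - l) *\<^sub>R a + l *\<^sub>R q" using between_Em[OF eq2] by blast
  have "a - w = l *\<^sub>R (a - q)" using l(3) by (simp add: algebra_simps)
  hence "rho (a - w) = l * rho (a - q)" using l by (simp add: rho_scale)
  hence "td (u a) (c t) = l * td (u a) (u b)" using z w eq1 by simp
  moreover have "c t = u ((1 - l) *\<^sub>R a + l *\<^sub>R q)" using z w l by simp
  ultimately show ?thesis using q(1) eq1 l by blast
qed

lemma geo_mid:
  assumes c: "min_geodesic tet_surface td (u a) (u b) c" and D: "td (u a) (u b) > 0"
  shows "\<exists>t\<in>{0..1}. \<exists>q. u q = u b \<and> rho (a - q) = td (u a) (u b) \<and> c t = u ((1/2) *\<^sub>R (a + q))"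
proof -
  define h where "h t = td (u a) (c t)" for t
  have cT: "c s \<in> tet_surface" if "s \<in> {0..1}" for s using c that by (auto simp: min_geodesic_def mpath_def)
  have aT: "u a \<in> tet_surface" by (simp add: T_range)
  have cont: "continuous_on {0..1} h"
  proof (rule continuous_on_iff[THEN iffD2], intro ballI allI impI)
    fix t e assume t: "t \<in> {0..1::real}" and e: "(0::real) < e"
    obtain d where d: "d > 0" "\<forall>s\<in>{0..1}. \<bar>s - t\<bar> < d \<longrightarrow> td (c s) (c t) < e"
      using c t e unfolding min_geodesic_def mpath_def by blast
    show "\<exists>d>0. \<forall>s\<in>{0..1}. dist s t < d \<longrightarrow> dist (h s) (h t) < e"
    proof (intro exI[of _ d] conjI ballI impI)
      show "d > 0" using d by simp
      fix s :: real assume s: "s \<in> {0..1}" "dist s t < d"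
      have lt: "td (c s) (c t) < e" using d s by (simp add: dist_real_def)
      have "h s \<le> h t + td (c t) (c s)" unfolding h_def using tdT_tri[OF aT cT[OF t] cT[OF s(1)]] .
      moreover have "h t \<le> h s + td (c s) (c t)" unfolding h_def using tdT_tri[OF aT cT[OF s(1)] cT[OF t]] .
      moreover have "td (c t) (c s) = td (c s) (c t)" using tdT_sym[OF cT[OF t] cT[OF s(1)]] .
      ultimately show "dist (h s) (h t) < e" using lt by (simp add: dist_real_def abs_if)
    qed
  qed
  have h0: "h 0 = 0" "h 1 = td (u a) (u b)" using c by (auto simp: h_def min_geodesic_def td_self)
  obtain t where t: "t \<in> {0..1}" "h t = td (u a) (u b) / 2"
    using IVT'[of h 0 "td (u a) (u b) / 2" 1] h0 D cont by auto
  obtain q l where ql: "u q = u b" "rho (a - q) = td (u a) (u b)" "0 \<le> l" "l \<le> 1"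
    "c t = u ((1 - l) *\<^sub>R a + l *\<^sub>R q)" "td (u a) (c t) = l * td (u a) (u b)"
    using geo_point[OF c t(1)] by blast
  have l2: "l = 1/2" using ql(6) t(2) D unfolding h_def by (simp add: field_simps)
  have "(1 - l) *\<^sub>R a + l *\<^sub>R q = (1/2) *\<^sub>R (a + q)" unfolding l2 by (simp add: scaleR_add_right)
  hence "c t = u ((1/2) *\<^sub>R (a + q))" using ql(5) by simp
  thus ?thesis using t ql by blast
qed

definition xP :: pt where "xP = (4/5, 1)"
definition yP :: pt where "yP = (2/5, 1/5)"

definition eg :: "nat \<Rightarrow> real" where "eg k = (if k = 2 \<or> k = 3 then -1 else 1)"
definition ig :: "nat \<Rightarrow> int" where "ig k = (if k = 3 then 1 else 0)"
definition jg :: "nat \<Rightarrow> int" where "jg k = (if k = 1 \<or> k = 2 then 1 else 0)"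
definition gl :: "nat \<Rightarrow> pt \<Rightarrow> pt" where "gl k y = lift (eg k) (ig k) (jg k) y"

lemma eg_pm: "eg k = 1 \<or> eg k = -1" by (simp add: eg_def)

lemma u_gl: "u (gl k y) = u y" unfolding gl_def by (rule u_lift[OF eg_pm])

definition mP1 :: pt where "mP1 = (3/5, 8/5)"
definition mP2 :: pt where "mP2 = (1/5, 7/5)"
definition mP3 :: pt where "mP3 = (6/5, 2/5)"
definition mP4 :: pt where "mP4 = (3/5, 3/5)"
lemmas mP_defs = mP1_def mP2_def mP3_def mP4_def

definition mP :: "nat \<Rightarrow> pt" where
  "mP k = (if k = 1 then mP1 else if k = 2 then mP2 else if k = 3 then mP3 else mP4)"

lemma mP_eq: "k \<in> {1,2,3,4} \<Longrightarrow> (1/2) *\<^sub>R (xP + gl k yP) = mP k"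
  by (auto simp: mP_def mP_defs gl_def lift_def xP_def yP_def eg_def ig_def jg_def)

lemma cand:
  fixes a i :: int and w :: real
  assumes "2 * of_int a \<le> w" "w \<le> 2 * of_int a + 2"
  shows "2 \<le> \<bar>w - 2 * of_int i\<bar> \<or> i = a \<or> i = a + 1"
proof (cases "2 \<le> \<bar>w - 2 * of_int i\<bar>")
  case False
  hence h: "w - 2 * of_int i < 2" "-2 < w - 2 * of_int i" by auto
  have "real_of_int (a - 1) < real_of_int i" using h assms by simp
  hence "a - 1 < i" by (simp only: of_int_less_iff)
  moreover have "real_of_int i < real_of_int (a + 2)" using h assms by simp
  hence "i < a + 2" by (simp only: of_int_less_iff)
  ultimately show ?thesis by auto
qed simp

lemma sq_ge4: "2 \<le> \<bar>v :: real\<bar> \<Longrightarrow> 4 \<le> v\<^sup>2"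
proof -
  assume "2 \<le> \<bar>v\<bar>"
  hence "2\<^sup>2 \<le> \<bar>v\<bar>\<^sup>2" by (intro power_mono) auto
  thus ?thesis by simp
qed

lemma Qf_big1: "2 \<le> \<bar>fst v\<bar> \<Longrightarrow> 3 \<le> Qf v"
proof -
  assume "2 \<le> \<bar>fst v\<bar>"
  hence "4 \<le> (fst v)\<^sup>2" by (rule sq_ge4)
  moreover have "3/4 * (fst v)\<^sup>2 \<le> Qf v" by (rule Qf_ge1)
  ultimately show ?thesis by linarith
qed

lemma Qf_big2: "2 \<le> \<bar>snd v\<bar> \<Longrightarrow> 3 \<le> Qf v"
proof -
  assume "2 \<le> \<bar>snd v\<bar>"
  hence "4 \<le> (snd v)\<^sup>2" by (rule sq_ge4)
  moreover have "3/4 * (snd v)\<^sup>2 \<le> Qf v" by (rule Qf_ge2)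
  ultimately show ?thesis by linarith
qed

lemma grid_lb:
  fixes a b i j :: int
  assumes "c \<le> 3" "2 * of_int a \<le> w1" "w1 \<le> 2 * of_int a + 2" "2 * of_int b \<le> w2" "w2 \<le> 2 * of_int b + 2"
   "c \<le> Qf (w1 - 2 * of_int a, w2 - 2 * of_int b)" "c \<le> Qf (w1 - 2 * of_int (a+1), w2 - 2 * of_int b)"
   "c \<le> Qf (w1 - 2 * of_int a, w2 - 2 * of_int (b+1))" "c \<le> Qf (w1 - 2 * of_int (a+1), w2 - 2 * of_int (b+1))"
  shows "c \<le> Qf (w1 - 2 * of_int i, w2 - 2 * of_int j)"
proof -
  have ci: "2 \<le> \<bar>w1 - 2 * of_int i\<bar> \<or> i = a \<or> i = a + 1" using assms(2,3) by (rule cand)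
  have cj: "2 \<le> \<bar>w2 - 2 * of_int j\<bar> \<or> j = b \<or> j = b + 1" using assms(4,5) by (rule cand)
  show ?thesis
  proof (cases "2 \<le> \<bar>w1 - 2 * of_int i\<bar> \<or> 2 \<le> \<bar>w2 - 2 * of_int j\<bar>")
    case True
    hence "3 \<le> Qf (w1 - 2 * of_int i, w2 - 2 * of_int j)" using Qf_big1 Qf_big2 by force
    thus ?thesis using assms(1) by linarith
  next
    case False
    hence "(i = a \<or> i = a + 1) \<and> (j = b \<or> j = b + 1)" using ci cj by auto
    thus ?thesis using assms(6-9) by auto
  qed
qed

lemma rho_ge_half: assumes "1/25 \<le> Qf v" shows "1/2 \<le> rho v"
  unfolding rho_def
proof (rule real_le_rsqrt)
  show "(1/2)\<^sup>2 \<le> 8 * Qf v" using assms by (simp add: power2_eq_square)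
qed

lemma gapP:
  assumes e: "e = 1 \<or> e = -1"
  shows "(e = 1 \<and> i = 0 \<and> j = 1) \<or> (e = -1 \<and> i = 0 \<and> j = 1) \<or> (e = -1 \<and> i = 1 \<and> j = 0) \<or>
         (e = 1 \<and> i = 0 \<and> j = 0) \<or> 48/25 \<le> Qf (xP - lift e i j yP)"
proof (cases "e = 1")
  case True
  have eq: "xP - lift e i j yP = (2/5 - 2 * of_int i, 4/5 - 2 * of_int j)"
    using True by (simp add: xP_def yP_def lift_def)
  have ci: "2 \<le> \<bar>(2/5::real) - 2 * of_int i\<bar> \<or> i = 0 \<or> i = 0 + 1" by (rule cand) simp_all
  have cj: "2 \<le> \<bar>(4/5::real) - 2 * of_int j\<bar> \<or> j = 0 \<or> j = 0 + 1" by (rule cand) simp_all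
  show ?thesis
  proof (cases "2 \<le> \<bar>(2/5::real) - 2 * of_int i\<bar> \<or> 2 \<le> \<bar>(4/5::real) - 2 * of_int j\<bar>")
    case c: True
    hence "3 \<le> Qf (2/5 - 2 * of_int i, 4/5 - 2 * of_int j)" using Qf_big1 Qf_big2 by force
    thus ?thesis unfolding eq by simp
  next
    case False
    hence "(i = 0 \<or> i = 1) \<and> (j = 0 \<or> j = 1)" using ci cj by auto
    thus ?thesis unfolding eq using True by (auto simp: Qf_def power2_eq_square)
  qed
next
  case False
  hence em: "e = -1" using e by simp
  have eq: "xP - lift e i j yP = (6/5 - 2 * of_int i, 6/5 - 2 * of_int j)"
    using em by (simp add: xP_def yP_def lift_def)
  have ci: "2 \<le> \<bar>(6/5::real) - 2 * of_int i\<bar> \<or> i = 0 \<or> i = 0 + 1" by (rule cand) simp_all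
  have cj: "2 \<le> \<bar>(6/5::real) - 2 * of_int j\<bar> \<or> j = 0 \<or> j = 0 + 1" by (rule cand) simp_all
  show ?thesis
  proof (cases "2 \<le> \<bar>(6/5::real) - 2 * of_int i\<bar> \<or> 2 \<le> \<bar>(6/5::real) - 2 * of_int j\<bar>")
    case c: True
    hence "3 \<le> Qf (6/5 - 2 * of_int i, 6/5 - 2 * of_int j)" using Qf_big1 Qf_big2 by force
    thus ?thesis unfolding eq by simp
  next
    case False
    hence "(i = 0 \<or> i = 1) \<and> (j = 0 \<or> j = 1)" using ci cj by auto
    thus ?thesis unfolding eq using em by (auto simp: Qf_def power2_eq_square)
  qed
qed

lemma sep_12: "1/2 \<le> td (u mP1) (u mP2)"
proof (rule td_ge)
  fix q assume "u q = u mP2"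
  then obtain e i j where e: "e = 1 \<or> e = -1" "q = lift e i j mP2" using fiber by blast
  have "1/25 \<le> Qf (mP1 - q)"
  proof (cases "e = 1")
    case True
    have "Qf (mP1 - lift (1) i j mP2) = Qf ((2/5) - 2 * of_int i, (1/5) - 2 * of_int j)"
      by (simp add: mP_defs lift_def)
    moreover have "1/25 \<le> Qf ((2/5) - 2 * of_int i, (1/5) - 2 * of_int j)"
      by (rule grid_lb[where a="(0)" and b="(0)"]) (simp_all add: Qf_def power2_eq_square)
    ultimately show ?thesis using e True by simp
  next
    case False
    hence em: "e = -1" using e by simp
    have "Qf (mP1 - lift (-1) i j mP2) = Qf ((4/5) - 2 * of_int i, (3) - 2 * of_int j)"
      by (simp add: mP_defs lift_def)
    moreover have "1/25 \<le> Qf ((4/5) - 2 * of_int i, (3) - 2 * of_int j)"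
      by (rule grid_lb[where a="(0)" and b="(1)"]) (simp_all add: Qf_def power2_eq_square)
    ultimately show ?thesis using e em by simp
  qed
  thus "1/2 \<le> rho (mP1 - q)" by (rule rho_ge_half)
qed

lemma sep_13: "1/2 \<le> td (u mP1) (u mP3)"
proof (rule td_ge)
  fix q assume "u q = u mP3"
  then obtain e i j where e: "e = 1 \<or> e = -1" "q = lift e i j mP3" using fiber by blast
  have "1/25 \<le> Qf (mP1 - q)"
  proof (cases "e = 1")
    case True
    have "Qf (mP1 - lift (1) i j mP3) = Qf ((-3/5) - 2 * of_int i, (6/5) - 2 * of_int j)"
      by (simp add: mP_defs lift_def)
    moreover have "1/25 \<le> Qf ((-3/5) - 2 * of_int i, (6/5) - 2 * of_int j)"
      by (rule grid_lb[where a="(-1)" and b="(0)"]) (simp_all add: Qf_def power2_eq_square)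
    ultimately show ?thesis using e True by simp
  next
    case False
    hence em: "e = -1" using e by simp
    have "Qf (mP1 - lift (-1) i j mP3) = Qf ((9/5) - 2 * of_int i, (2) - 2 * of_int j)"
      by (simp add: mP_defs lift_def)
    moreover have "1/25 \<le> Qf ((9/5) - 2 * of_int i, (2) - 2 * of_int j)"
      by (rule grid_lb[where a="(0)" and b="(1)"]) (simp_all add: Qf_def power2_eq_square)
    ultimately show ?thesis using e em by simp
  qed
  thus "1/2 \<le> rho (mP1 - q)" by (rule rho_ge_half)
qed

lemma sep_14: "1/2 \<le> td (u mP1) (u mP4)"
proof (rule td_ge)
  fix q assume "u q = u mP4"
  then obtain e i j where e: "e = 1 \<or> e = -1" "q = lift e i j mP4" using fiber by blast
  have "1/25 \<le> Qf (mP1 - q)"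
  proof (cases "e = 1")
    case True
    have "Qf (mP1 - lift (1) i j mP4) = Qf ((0) - 2 * of_int i, (1) - 2 * of_int j)"
      by (simp add: mP_defs lift_def)
    moreover have "1/25 \<le> Qf ((0) - 2 * of_int i, (1) - 2 * of_int j)"
      by (rule grid_lb[where a="(0)" and b="(0)"]) (simp_all add: Qf_def power2_eq_square)
    ultimately show ?thesis using e True by simp
  next
    case False
    hence em: "e = -1" using e by simp
    have "Qf (mP1 - lift (-1) i j mP4) = Qf ((6/5) - 2 * of_int i, (11/5) - 2 * of_int j)"
      by (simp add: mP_defs lift_def)
    moreover have "1/25 \<le> Qf ((6/5) - 2 * of_int i, (11/5) - 2 * of_int j)"
      by (rule grid_lb[where a="(0)" and b="(1)"]) (simp_all add: Qf_def power2_eq_square)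
    ultimately show ?thesis using e em by simp
  qed
  thus "1/2 \<le> rho (mP1 - q)" by (rule rho_ge_half)
qed

lemma sep_23: "1/2 \<le> td (u mP2) (u mP3)"
proof (rule td_ge)
  fix q assume "u q = u mP3"
  then obtain e i j where e: "e = 1 \<or> e = -1" "q = lift e i j mP3" using fiber by blast
  have "1/25 \<le> Qf (mP2 - q)"
  proof (cases "e = 1")
    case True
    have "Qf (mP2 - lift (1) i j mP3) = Qf ((-1) - 2 * of_int i, (1) - 2 * of_int j)"
      by (simp add: mP_defs lift_def)
    moreover have "1/25 \<le> Qf ((-1) - 2 * of_int i, (1) - 2 * of_int j)"
      by (rule grid_lb[where a="(-1)" and b="(0)"]) (simp_all add: Qf_def power2_eq_square)
    ultimately show ?thesis using e True by simp
  next
    case False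
    hence em: "e = -1" using e by simp
    have "Qf (mP2 - lift (-1) i j mP3) = Qf ((7/5) - 2 * of_int i, (9/5) - 2 * of_int j)"
      by (simp add: mP_defs lift_def)
    moreover have "1/25 \<le> Qf ((7/5) - 2 * of_int i, (9/5) - 2 * of_int j)"
      by (rule grid_lb[where a="(0)" and b="(0)"]) (simp_all add: Qf_def power2_eq_square)
    ultimately show ?thesis using e em by simp
  qed
  thus "1/2 \<le> rho (mP2 - q)" by (rule rho_ge_half)
qed

lemma sep_24: "1/2 \<le> td (u mP2) (u mP4)"
proof (rule td_ge)
  fix q assume "u q = u mP4"
  then obtain e i j where e: "e = 1 \<or> e = -1" "q = lift e i j mP4" using fiber by blast
  have "1/25 \<le> Qf (mP2 - q)"
  proof (cases "e = 1")
    case True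
    have "Qf (mP2 - lift (1) i j mP4) = Qf ((-2/5) - 2 * of_int i, (4/5) - 2 * of_int j)"
      by (simp add: mP_defs lift_def)
    moreover have "1/25 \<le> Qf ((-2/5) - 2 * of_int i, (4/5) - 2 * of_int j)"
      by (rule grid_lb[where a="(-1)" and b="(0)"]) (simp_all add: Qf_def power2_eq_square)
    ultimately show ?thesis using e True by simp
  next
    case False
    hence em: "e = -1" using e by simp
    have "Qf (mP2 - lift (-1) i j mP4) = Qf ((4/5) - 2 * of_int i, (2) - 2 * of_int j)"
      by (simp add: mP_defs lift_def)
    moreover have "1/25 \<le> Qf ((4/5) - 2 * of_int i, (2) - 2 * of_int j)"
      by (rule grid_lb[where a="(0)" and b="(1)"]) (simp_all add: Qf_def power2_eq_square)
    ultimately show ?thesis using e em by simp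
  qed
  thus "1/2 \<le> rho (mP2 - q)" by (rule rho_ge_half)
qed

lemma sep_34: "1/2 \<le> td (u mP3) (u mP4)"
proof (rule td_ge)
  fix q assume "u q = u mP4"
  then obtain e i j where e: "e = 1 \<or> e = -1" "q = lift e i j mP4" using fiber by blast
  have "1/25 \<le> Qf (mP3 - q)"
  proof (cases "e = 1")
    case True
    have "Qf (mP3 - lift (1) i j mP4) = Qf ((3/5) - 2 * of_int i, (-1/5) - 2 * of_int j)"
      by (simp add: mP_defs lift_def)
    moreover have "1/25 \<le> Qf ((3/5) - 2 * of_int i, (-1/5) - 2 * of_int j)"
      by (rule grid_lb[where a="(0)" and b="(-1)"]) (simp_all add: Qf_def power2_eq_square)
    ultimately show ?thesis using e True by simp
  next
    case False
    hence em: "e = -1" using e by simp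
    have "Qf (mP3 - lift (-1) i j mP4) = Qf ((9/5) - 2 * of_int i, (1) - 2 * of_int j)"
      by (simp add: mP_defs lift_def)
    moreover have "1/25 \<le> Qf ((9/5) - 2 * of_int i, (1) - 2 * of_int j)"
      by (rule grid_lb[where a="(0)" and b="(0)"]) (simp_all add: Qf_def power2_eq_square)
    ultimately show ?thesis using e em by simp
  qed
  thus "1/2 \<le> rho (mP3 - q)" by (rule rho_ge_half)
qed

definition near :: "pt \<Rightarrow> pt \<Rightarrow> bool" where
  "near x y \<longleftrightarrow> rho (x - xP) < 1/100 \<and> rho (y - yP) < 1/100"

definition Lk :: "nat \<Rightarrow> pt \<Rightarrow> pt \<Rightarrow> real" where "Lk k x y = Qf (x - gl k y)"

definition MinSet :: "pt \<Rightarrow> pt \<Rightarrow> nat set" where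
  "MinSet x y = {k \<in> {1,2,3,4}. \<forall>k'\<in>{1,2,3,4}. Lk k x y \<le> Lk k' x y}"

lemma MinSetD: "k \<in> MinSet x y \<Longrightarrow> k' \<in> {1,2,3,4} \<Longrightarrow> Lk k x y \<le> Lk k' x y"
  unfolding MinSet_def by blast

lemma MinSet_sub: "k \<in> MinSet x y \<Longrightarrow> k \<in> {1,2,3,4}"
  unfolding MinSet_def by blast

lemma Qf_nonneg: "0 \<le> Qf v"
proof -
  have "0 \<le> ((fst v)\<^sup>2 + (snd v)\<^sup>2) / 2" by simp
  thus ?thesis using Qf_ge_norm[of v] by linarith
qed

lemma rho_le_iff: "rho a \<le> rho b \<longleftrightarrow> Qf a \<le> Qf b"
  unfolding rho_def by simp

lemma lift_diff: "lift e i j y - lift e i j y' = e *\<^sub>R (y - y')"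
  by (simp add: lift_def algebra_simps prod_eq_iff)

lemma rho_pert_ge:
  assumes "e = 1 \<or> e = -1"
  shows "rho (xP - lift e i j yP) - rho (x - xP) - rho (y - yP) \<le> rho (x - lift e i j y)"
proof -
  have "xP - lift e i j yP = (x - lift e i j y) + (xP - x) + (lift e i j y - lift e i j yP)"
    by (simp add: algebra_simps)
  hence eq: "rho (xP - lift e i j yP) = rho ((x - lift e i j y) + (xP - x) + (lift e i j y - lift e i j yP))"
    by (rule arg_cong)
  moreover have "rho ((x - lift e i j y) + (xP - x) + (lift e i j y - lift e i j yP)) \<le> rho ((x - lift e i j y) + (xP - x)) + rho (lift e i j y - lift e i j yP)"
    by (rule rho_triangle)
  moreover have "rho ((x - lift e i j y) + (xP - x)) \<le> rho (x - lift e i j y) + rho (xP - x)"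
    by (rule rho_triangle)
  ultimately have "rho (xP - lift e i j yP) \<le> rho (x - lift e i j y) + rho (xP - x) + rho (lift e i j y - lift e i j yP)"
    by linarith
  moreover have "rho (lift e i j y - lift e i j yP) = rho (y - yP)"
    using assms by (auto simp: lift_diff rho_scale)
  moreover have "rho (xP - x) = rho (x - xP)" by (rule rho_commute)
  ultimately show ?thesis by linarith
qed

lemma rho_pert_le:
  assumes "e = 1 \<or> e = -1"
  shows "rho (x - lift e i j y) \<le> rho (xP - lift e i j yP) + rho (x - xP) + rho (y - yP)"
proof -
  have "x - lift e i j y = (xP - lift e i j yP) + (x - xP) + (lift e i j yP - lift e i j y)"
    by (simp add: algebra_simps)
  hence eq: "rho (x - lift e i j y) = rho ((xP - lift e i j yP) + (x - xP) + (lift e i j yP - lift e i j y))"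
    by (rule arg_cong)
  moreover have "rho ((xP - lift e i j yP) + (x - xP) + (lift e i j yP - lift e i j y)) \<le> rho ((xP - lift e i j yP) + (x - xP)) + rho (lift e i j yP - lift e i j y)"
    by (rule rho_triangle)
  moreover have "rho ((xP - lift e i j yP) + (x - xP)) \<le> rho (xP - lift e i j yP) + rho (x - xP)"
    by (rule rho_triangle)
  ultimately have "rho (x - lift e i j y) \<le> rho (xP - lift e i j yP) + rho (x - xP) + rho (lift e i j yP - lift e i j y)"
    by linarith
  moreover have "rho (lift e i j yP - lift e i j y) = rho (y - yP)"
    using assms by (auto simp: lift_diff rho_scale rho_commute)
  ultimately show ?thesis by linarith
qed

definition DP :: real where "DP = sqrt (8 * (28/25))"

lemma QP: "k \<in> {1,2,3,4} \<Longrightarrow> Qf (xP - gl k yP) = 28/25"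
  by (auto simp: gl_def lift_def xP_def yP_def eg_def ig_def jg_def Qf_def power2_eq_square)

lemma rhoP: "k \<in> {1,2,3,4} \<Longrightarrow> rho (xP - gl k yP) = DP"
  by (simp add: rho_def QP DP_def)

lemma DP_bounds: "29/10 \<le> DP" "DP \<le> 3"
proof -
  show "29/10 \<le> DP" unfolding DP_def by (rule real_le_rsqrt) (simp add: power2_eq_square)
  show "DP \<le> 3" unfolding DP_def by (rule real_le_lsqrt) (simp_all add: power2_eq_square)
qed

lemma far_bound: "48/25 \<le> Qf v \<Longrightarrow> 39/10 \<le> rho v"
  unfolding rho_def by (rule real_le_rsqrt) (simp add: power2_eq_square)

lemma gl_lift: "gl k y = lift (eg k) (ig k) (jg k) y" by (simp add: gl_def)

lemma cand_gl:
  assumes "(e = 1 \<and> i = 0 \<and> j = 1) \<or> (e = -1 \<and> i = 0 \<and> j = 1) \<or> (e = -1 \<and> i = 1 \<and> j = 0) \<or> (e = 1 \<and> i = 0 \<and> j = 0)"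
  shows "\<exists>k\<in>{1,2,3,4}. lift e i j y = gl k y \<and> lift e i j yP = gl k yP"
proof -
  have g: "gl 1 = lift 1 0 1" "gl 2 = lift (-1) 0 1" "gl 3 = lift (-1) 1 0" "gl 4 = lift 1 0 0"
    by (auto simp: gl_def eg_def ig_def jg_def fun_eq_iff)
  from assms show ?thesis
  proof (elim disjE)
    assume "e = 1 \<and> i = 0 \<and> j = 1" thus ?thesis using g by (intro bexI[of _ 1]) auto
  next
    assume "e = -1 \<and> i = 0 \<and> j = 1" thus ?thesis using g by (intro bexI[of _ 2]) auto
  next
    assume "e = -1 \<and> i = 1 \<and> j = 0" thus ?thesis using g by (intro bexI[of _ 3]) auto
  next
    assume "e = 1 \<and> i = 0 \<and> j = 0" thus ?thesis using g by (intro bexI[of _ 4]) auto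
  qed
qed

lemma near_gl_le:
  assumes "near x y" "k \<in> {1,2,3,4}"
  shows "rho (x - gl k y) \<le> DP + 2/100" and "DP - 2/100 \<le> rho (x - gl k y)"
proof -
  have "rho (x - gl k y) \<le> rho (xP - gl k yP) + rho (x - xP) + rho (y - yP)"
    unfolding gl_lift by (rule rho_pert_le[OF eg_pm])
  thus "rho (x - gl k y) \<le> DP + 2/100" using assms rhoP[OF assms(2)] unfolding near_def by linarith
  have "rho (xP - gl k yP) - rho (x - xP) - rho (y - yP) \<le> rho (x - gl k y)"
    unfolding gl_lift by (rule rho_pert_ge[OF eg_pm])
  thus "DP - 2/100 \<le> rho (x - gl k y)" using assms rhoP[OF assms(2)] unfolding near_def by linarith
qed

lemma near_fiber:
  assumes n: "near x y" and q: "u q = u y"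
  shows "(\<exists>k\<in>{1,2,3,4}. q = gl k y) \<or> 388/100 \<le> rho (x - q)"
proof -
  obtain e i j where e: "e = 1 \<or> e = -1" "q = lift e i j y" using fiber[OF q] by blast
  let ?C = "(e = 1 \<and> i = 0 \<and> j = 1) \<or> (e = -1 \<and> i = 0 \<and> j = 1) \<or> (e = -1 \<and> i = 1 \<and> j = 0) \<or> (e = 1 \<and> i = 0 \<and> j = 0)"
  show ?thesis
  proof (cases ?C)
    case True
    then obtain k where "k \<in> {1,2,3,4}" "lift e i j y = gl k y" using cand_gl[of e i j y] by blast
    thus ?thesis using e(2) by blast
  next
    case False
    hence "48/25 \<le> Qf (xP - lift e i j yP)" using gapP[OF e(1), of i j] by blast
    hence "39/10 \<le> rho (xP - lift e i j yP)" by (rule far_bound)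
    moreover have "rho (xP - lift e i j yP) - rho (x - xP) - rho (y - yP) \<le> rho (x - lift e i j y)"
      by (rule rho_pert_ge[OF e(1)])
    ultimately have "388/100 \<le> rho (x - lift e i j y)" using n unfolding near_def by linarith
    thus ?thesis using e(2) by blast
  qed
qed

lemma near_td:
  assumes n: "near x y" and k: "k \<in> MinSet x y"
  shows "td (u x) (u y) = rho (x - gl k y)"
proof (rule antisym)
  show "td (u x) (u y) \<le> rho (x - gl k y)" by (rule td_le) (simp add: u_gl)
  have k4: "k \<in> {1,2,3,4}" using MinSet_sub[OF k] .
  show "rho (x - gl k y) \<le> td (u x) (u y)"
  proof (rule td_ge)
    fix q assume q: "u q = u y"
    from near_fiber[OF n q] show "rho (x - gl k y) \<le> rho (x - q)"
    proof
      assume "\<exists>k'\<in>{1,2,3,4}. q = gl k' y"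
      then obtain k' where k': "k' \<in> {1,2,3,4}" "q = gl k' y" by blast
      have "Lk k x y \<le> Lk k' x y" using MinSetD[OF k k'(1)] .
      thus ?thesis using k' by (simp add: Lk_def rho_le_iff)
    next
      assume "388/100 \<le> rho (x - q)"
      thus ?thesis using near_gl_le(1)[OF n k4] DP_bounds by linarith
    qed
  qed
qed

lemma near_min:
  assumes n: "near x y" and q: "u q = u y" and qd: "rho (x - q) = td (u x) (u y)"
  shows "\<exists>k\<in>MinSet x y. q = gl k y"
proof -
  have td1: "td (u x) (u y) \<le> rho (x - gl 1 y)" by (rule td_le) (simp add: u_gl)
  from near_fiber[OF n q] show ?thesis
  proof
    assume "\<exists>k'\<in>{1,2,3,4}. q = gl k' y"
    then obtain k' where k': "k' \<in> {1,2,3,4}" "q = gl k' y" by blast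
    have "k' \<in> MinSet x y"
      unfolding MinSet_def
    proof (intro CollectI conjI ballI)
      show "k' \<in> {1,2,3,4}" by (rule k'(1))
      fix k'' :: nat assume k'': "k'' \<in> {1,2,3,4}"
      have "td (u x) (u y) \<le> rho (x - gl k'' y)" by (rule td_le) (simp add: u_gl)
      hence "rho (x - gl k' y) \<le> rho (x - gl k'' y)" using qd k' by simp
      thus "Lk k' x y \<le> Lk k'' x y" by (simp add: Lk_def rho_le_iff)
    qed
    thus ?thesis using k' by blast
  next
    assume "388/100 \<le> rho (x - q)"
    thus ?thesis using td1 qd near_gl_le(1)[OF n, of 1] DP_bounds by simp
  qed
qed

lemma near_td_bounds:
  assumes "near x y"
  shows "DP - 2/100 \<le> td (u x) (u y)" "td (u x) (u y) \<le> DP + 2/100"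
proof -
  have "td (u x) (u y) \<le> rho (x - gl 1 y)" by (rule td_le) (simp add: u_gl)
  thus "td (u x) (u y) \<le> DP + 2/100" using near_gl_le(1)[OF assms, of 1] by simp
  show "DP - 2/100 \<le> td (u x) (u y)"
  proof (rule td_ge)
    fix q assume q: "u q = u y"
    from near_fiber[OF assms q] show "DP - 2/100 \<le> rho (x - q)"
    proof
      assume "\<exists>k'\<in>{1,2,3,4}. q = gl k' y"
      thus ?thesis using near_gl_le(2)[OF assms] by blast
    next
      assume "388/100 \<le> rho (x - q)" thus ?thesis using DP_bounds by linarith
    qed
  qed
qed

lemma half_half: "(1/2) *\<^sub>R v + (1/2) *\<^sub>R v = (v::pt)"
  by (simp add: scaleR_add_left[symmetric])

lemma sepP:
  assumes "k \<in> {1,2,3,4}" "k' \<in> {1,2,3,4}" "k \<noteq> k'"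
  shows "1/2 \<le> td (u (mP k)) (u (mP k'))"
proof -
  have s: "\<And>a b. 1/2 \<le> td (u a) (u b) \<Longrightarrow> 1/2 \<le> td (u b) (u a)" using td_sym by metis
  have m: "mP 1 = mP1" "mP (Suc 0) = mP1" "mP 2 = mP2" "mP 3 = mP3" "mP 4 = mP4" by (simp_all add: mP_def)
  show ?thesis using assms sep_12 sep_13 sep_14 sep_23 sep_24 sep_34
      s[OF sep_12] s[OF sep_13] s[OF sep_14] s[OF sep_23] s[OF sep_24] s[OF sep_34]
    by (auto simp: m)
qed

lemma td_tri3: "td (u a) (u d) \<le> td (u a) (u b) + td (u b) (u c) + td (u c) (u d)"
  using td_tri[where a=a and b=b and c=d] td_tri[where a=b and b=c and c=d] by linarith

lemma rho_half_diff:
  assumes "k \<in> {1,2,3,4}"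
  shows "2 * rho ((1/2) *\<^sub>R (x + gl k y) - mP k) \<le> rho (x - xP) + rho (y - yP)"
proof -
  have "(1/2) *\<^sub>R (x + gl k y) - mP k = (1/2) *\<^sub>R ((x - xP) + (gl k y - gl k yP))"
    using mP_eq[OF assms] by (metis (no_types, lifting) add_diff_add scaleR_right_diff_distrib)
  hence "rho ((1/2) *\<^sub>R (x + gl k y) - mP k) = (1/2) * rho ((x - xP) + (gl k y - gl k yP))"
    by (simp add: rho_scale)
  also have "\<dots> \<le> (1/2) * (rho (x - xP) + rho (gl k y - gl k yP))"
    using rho_triangle by simp
  also have "rho (gl k y - gl k yP) = rho (y - yP)"
    using eg_pm[of k] by (auto simp: gl_def lift_diff rho_scale)
  finally show ?thesis by (simp add: field_simps)
qed

lemma sep_contra: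
  assumes n1: "near x1 y1" and n2: "near x2 y2"
    and k: "k \<in> MinSet x1 y1" and nk: "k \<notin> MinSet x2 y2"
    and c2: "min_geodesic tet_surface td (u x2) (u y2) c2" and t: "t \<in> {0..1}"
    and close: "td (u ((1/2) *\<^sub>R (x1 + gl k y1))) (c2 t) < 1/10"
  shows False
proof -
  define m1 where "m1 = (1/2) *\<^sub>R (x1 + gl k y1)"
  define D1 where "D1 = td (u x1) (u y1)"
  define D2 where "D2 = td (u x2) (u y2)"
  have k4: "k \<in> {1,2,3,4}" using MinSet_sub[OF k] .
  have nd1: "rho (x1 - xP) < 1/100" "rho (y1 - yP) < 1/100" using n1 by (auto simp: near_def)
  have nd2: "rho (x2 - xP) < 1/100" "rho (y2 - yP) < 1/100" using n2 by (auto simp: near_def)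
  obtain q l where ql: "u q = u y2" "rho (x2 - q) = D2" "0 \<le> l" "l \<le> 1"
    "c2 t = u ((1 - l) *\<^sub>R x2 + l *\<^sub>R q)" "td (u x2) (c2 t) = l * D2"
    using geo_point[OF c2 t] unfolding D2_def by blast
  obtain k' where k': "k' \<in> MinSet x2 y2" "q = gl k' y2" using near_min[OF n2 ql(1)] ql(2) D2_def by blast
  have k'4: "k' \<in> {1,2,3,4}" using MinSet_sub[OF k'(1)] .
  have kk: "k \<noteq> k'" using nk k' by blast
  define w where "w = (1 - l) *\<^sub>R x2 + l *\<^sub>R q"
  define m2 where "m2 = (1/2) *\<^sub>R (x2 + q)"
  have D1e: "D1 = rho (x1 - gl k y1)" unfolding D1_def by (rule near_td[OF n1 k])
  have b1: "DP - 2/100 \<le> D1" "D1 \<le> DP + 2/100" using near_td_bounds[OF n1] D1_def by auto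
  have b2: "DP - 2/100 \<le> D2" "D2 \<le> DP + 2/100" using near_td_bounds[OF n2] D2_def by auto
  have x1m1: "x1 - m1 = (1/2) *\<^sub>R (x1 - gl k y1)" unfolding m1_def by (simp add: algebra_simps half_half)
  have m1g: "m1 - gl k y1 = (1/2) *\<^sub>R (x1 - gl k y1)" unfolding m1_def by (simp add: algebra_simps half_half)
  have A1: "td (u x1) (u m1) \<le> D1 / 2"
    using td_le_rho[of x1 m1] x1m1 D1e by (simp add: rho_scale)
  have A2: "td (u m1) (u y1) \<le> D1 / 2"
  proof -
    have "td (u m1) (u y1) \<le> rho (m1 - gl k y1)" by (rule td_le) (simp add: u_gl)
    thus ?thesis using m1g D1e by (simp add: rho_scale)
  qed
  have A3: "D1 \<le> td (u x1) (u m1) + td (u m1) (u y1)" unfolding D1_def by (rule td_tri)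
  have hx1: "td (u x1) (u m1) = D1 / 2" using A1 A2 A3 by linarith
  have x12: "td (u x1) (u x2) < 2/100"
  proof -
    have "td (u x1) (u x2) \<le> rho (x1 - x2)" by (rule td_le_rho)
    also have "\<dots> \<le> rho (x1 - xP) + rho (xP - x2)" by (rule rho_tri3)
    finally show ?thesis using nd1 nd2 rho_commute[of xP x2] by linarith
  qed
  have tsym: "td (u x2) (u x1) = td (u x1) (u x2)" by (rule td_sym)
  have h2a: "td (u x2) (u m1) \<le> td (u x2) (u x1) + td (u x1) (u m1)" by (rule td_tri)
  have h2b: "td (u x1) (u m1) \<le> td (u x1) (u x2) + td (u x2) (u m1)" by (rule td_tri)
  have cw: "c2 t = u w" using ql(5) w_def by simp
  have close': "td (u m1) (u w) < 1/10" using close cw m1_def by simp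
  have h3a: "td (u x2) (u w) \<le> td (u x2) (u m1) + td (u m1) (u w)" by (rule td_tri)
  have h3b: "td (u x2) (u m1) \<le> td (u x2) (u w) + td (u w) (u m1)" by (rule td_tri)
  have wsym: "td (u w) (u m1) = td (u m1) (u w)" by (rule td_sym)
  have lD: "td (u x2) (u w) = l * D2" using ql(6) cw by simp
  have "w - m2 = (1/2 - l) *\<^sub>R (x2 - q)" unfolding w_def m2_def by (simp add: algebra_simps half_half)
  hence wm2: "rho (w - m2) = \<bar>1/2 - l\<bar> * D2" using ql(2) by (simp add: rho_scale)
  have D2p: "0 \<le> D2" using b2 DP_bounds by linarith
  have "D2 / 2 - l * D2 = (1/2 - l) * D2" by (simp add: algebra_simps)
  hence "\<bar>1/2 - l\<bar> * D2 = \<bar>D2 / 2 - l * D2\<bar>" using D2p by (simp add: abs_mult)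
  hence wm2': "rho (w - m2) < 14/100" using wm2 lD hx1 h2a h2b h3a h3b wsym tsym close' x12 b1 b2
    by (simp add: abs_if) linarith?
  have d1: "td (u w) (u m2) < 14/100" using td_le_rho[of w m2] wm2' by linarith
  have d0: "td (u (mP k)) (u m1) \<le> 1/100"
  proof -
    have "td (u (mP k)) (u m1) \<le> rho (mP k - m1)" by (rule td_le_rho)
    also have "\<dots> = rho (m1 - mP k)" by (rule rho_commute)
    finally show ?thesis using nd1 rho_half_diff[OF k4, of x1 y1] unfolding m1_def by linarith
  qed
  have d2: "td (u m2) (u (mP k')) \<le> 1/100"
  proof -
    have "td (u m2) (u (mP k')) \<le> rho (m2 - mP k')" by (rule td_le_rho)
    thus ?thesis using nd2 rho_half_diff[OF k'4, of x2 y2] unfolding m2_def k'(2) by linarith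
  qed
  have "td (u (mP k)) (u (mP k')) \<le> td (u (mP k)) (u m1) + td (u m1) (u w) + td (u w) (u m2) + td (u m2) (u (mP k'))"
    using td_tri3[where a="mP k" and b=m1 and c=w and d=m2] td_tri[where a="mP k" and b=m2 and c="mP k'"] by linarith
  hence "td (u (mP k)) (u (mP k')) < 1/2" using d0 close' d1 d2 by linarith
  thus False using sepP[OF k4 k'4 kk] by linarith
qed

lemma index_ex:
  assumes n: "near x y" and c: "min_geodesic tet_surface td (u x) (u y) c"
  shows "\<exists>k\<in>MinSet x y. \<exists>t\<in>{0..1}. c t = u ((1/2) *\<^sub>R (x + gl k y))"
proof -
  have "0 < td (u x) (u y)" using near_td_bounds(1)[OF n] DP_bounds by linarith
  then obtain t q where tq: "t \<in> {0..1}" "u q = u y" "rho (x - q) = td (u x) (u y)" "c t = u ((1/2) *\<^sub>R (x + q))"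
    using geo_mid[OF c] by blast
  obtain k where "k \<in> MinSet x y" "q = gl k y" using near_min[OF n tq(2) tq(3)] by blast
  thus ?thesis using tq by blast
qed

lemma excl:
  assumes gm: "gmpr tet_surface td E \<phi>"
    and n1: "near x1 y1" and k: "k \<in> MinSet x1 y1" and t: "t \<in> {0..1}"
    and ph: "\<phi> (u x1, u y1) t = u ((1/2) *\<^sub>R (x1 + gl k y1))"
    and n2: "near x2 y2" and nk: "k \<notin> MinSet x2 y2"
    and close: "\<forall>q\<in>E. max (td (u x1) (fst q)) (td (u y1) (snd q)) < \<delta> \<longrightarrow>
                   (\<forall>t\<in>{0..1}. td (\<phi> (u x1, u y1) t) (\<phi> q t) < 1/10)"
    and cl2: "max (td (u x1) (u x2)) (td (u y1) (u y2)) < \<delta>"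
  shows "(u x2, u y2) \<notin> E"
proof
  assume inE: "(u x2, u y2) \<in> E"
  have c2: "min_geodesic tet_surface td (u x2) (u y2) (\<phi> (u x2, u y2))"
    using gm inE unfolding gmpr_def by auto
  have "td (\<phi> (u x1, u y1) t) (\<phi> (u x2, u y2) t) < 1/10" using close inE cl2 t by auto
  hence "td (u ((1/2) *\<^sub>R (x1 + gl k y1))) (\<phi> (u x2, u y2) t) < 1/10" using ph by simp
  thus False using sep_contra[OF n1 n2 k nk c2 t] by blast
qed

definition dQ :: "nat \<Rightarrow> pt" where
  "dQ a = (if a = 1 then (2, -10) else if a = 2 then (-1, 5) else if a = 3 then (-8, 10) else (4, -5))"
definition eQ :: "nat \<Rightarrow> pt" where
  "eQ a = (if a = 1 then (-9, 3) else if a = 2 then (27, -9) else if a = 3 then (6, 3) else (-18, -9))"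

lemma LQ1: "k \<in> {1,2,3,4} \<Longrightarrow> Lk k (xP + t *\<^sub>R dQ 1) (yP + t *\<^sub>R eQ 1) =
   (if k = 1 then 28/25 + 108/5*t + 147*t\<^sup>2 else 28/25 - 42/5*t + 147*t\<^sup>2)"
  by (auto simp: Lk_def gl_def lift_def eg_def ig_def jg_def xP_def yP_def dQ_def eQ_def Qf_def power2_eq_square field_simps)

lemma LQ2: "k \<in> {1,2,3,4} \<Longrightarrow> Lk k (xP + t *\<^sub>R dQ 2) (yP + t *\<^sub>R eQ 2) =
   (if k = 2 then 28/25 + 216/5*t + 588*t\<^sup>2 else 28/25 - 84/5*t + 588*t\<^sup>2)"
  by (auto simp: Lk_def gl_def lift_def eg_def ig_def jg_def xP_def yP_def dQ_def eQ_def Qf_def power2_eq_square field_simps)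

lemma LQ3: "k \<in> {1,2,3,4} \<Longrightarrow> Lk k (xP + t *\<^sub>R dQ 3) (yP + t *\<^sub>R eQ 3) =
   (if k = 3 then 28/25 + 108/5*t + 147*t\<^sup>2 else 28/25 - 42/5*t + 147*t\<^sup>2)"
  by (auto simp: Lk_def gl_def lift_def eg_def ig_def jg_def xP_def yP_def dQ_def eQ_def Qf_def power2_eq_square field_simps)

lemma LQ4: "k \<in> {1,2,3,4} \<Longrightarrow> Lk k (xP + t *\<^sub>R dQ 4) (yP + t *\<^sub>R eQ 4) =
   (if k = 4 then 28/25 + 216/5*t + 588*t\<^sup>2 else 28/25 - 84/5*t + 588*t\<^sup>2)"
  by (auto simp: Lk_def gl_def lift_def eg_def ig_def jg_def xP_def yP_def dQ_def eQ_def Qf_def power2_eq_square field_simps)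

lemma MinSet_gen:
  assumes S: "S \<subseteq> {1,2,3,4}" "S \<noteq> {}"
    and eq: "\<And>k. k \<in> S \<Longrightarrow> Lk k x y = V"
    and gt: "\<And>k. k \<in> {1,2,3,4} \<Longrightarrow> k \<notin> S \<Longrightarrow> V < Lk k x y"
  shows "MinSet x y = S"
proof
  show "MinSet x y \<subseteq> S"
  proof
    fix k assume k: "k \<in> MinSet x y"
    have k4: "k \<in> {1,2,3,4}" using MinSet_sub[OF k] .
    obtain s where s: "s \<in> S" using S(2) by blast
    have "Lk k x y \<le> Lk s x y" using MinSetD[OF k] s S(1) by blast
    thus "k \<in> S" using gt[OF k4] eq[OF s] by force
  qed
next
  show "S \<subseteq> MinSet x y"
  proof
    fix k assume k: "k \<in> S"
    show "k \<in> MinSet x y" unfolding MinSet_def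
    proof (intro CollectI conjI ballI)
      show "k \<in> {1,2,3,4}" using k S(1) by blast
      fix k' :: nat assume k': "k' \<in> {1,2,3,4}"
      show "Lk k x y \<le> Lk k' x y"
        using eq[OF k] gt[OF k'] eq[of k'] by (cases "k' \<in> S") force+
    qed
  qed
qed

lemma Qlevel:
  assumes a: "a \<in> {1,2,3,4}" and t: "0 < t"
  shows "MinSet (xP + t *\<^sub>R dQ a) (yP + t *\<^sub>R eQ a) = {1,2,3,4} - {a}"
proof -
  have "a = 1 \<or> a = 2 \<or> a = 3 \<or> a = 4" using a by auto
  thus ?thesis
  proof (elim disjE)
    assume a1: "a = 1"
    show ?thesis unfolding a1
      by (rule MinSet_gen[where V="28/25 - 42/5*t + 147*t\<^sup>2"]) (use t in \<open>auto simp: LQ1 LQ1[simplified]\<close>)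
  next
    assume a1: "a = 2"
    show ?thesis unfolding a1
      by (rule MinSet_gen[where V="28/25 - 84/5*t + 588*t\<^sup>2"]) (use t in \<open>auto simp: LQ2 LQ2[simplified]\<close>)
  next
    assume a1: "a = 3"
    show ?thesis unfolding a1
      by (rule MinSet_gen[where V="28/25 - 42/5*t + 147*t\<^sup>2"]) (use t in \<open>auto simp: LQ3 LQ3[simplified]\<close>)
  next
    assume a1: "a = 4"
    show ?thesis unfolding a1
      by (rule MinSet_gen[where V="28/25 - 84/5*t + 588*t\<^sup>2"]) (use t in \<open>auto simp: LQ4 LQ4[simplified]\<close>)
  qed
qed

lemma MinSet_P: "MinSet xP yP = {1,2,3,4}"
  by (rule MinSet_gen[where V="28/25"]) (auto simp: Lk_def QP)

definition Bf :: "pt \<Rightarrow> pt \<Rightarrow> real" where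
  "Bf v w = fst v * fst w + (fst v * snd w + snd v * fst w) / 2 + snd v * snd w"
definition Pv :: "nat \<Rightarrow> pt \<Rightarrow> pt \<Rightarrow> pt" where "Pv k x y = eg k *\<^sub>R (x - gl k y)"
definition Jp :: "pt \<Rightarrow> pt" where "Jp v = (fst v + 2 * snd v, - (2 * fst v + snd v))"
definition det2 :: "pt \<Rightarrow> pt \<Rightarrow> real" where "det2 v w = fst v * snd w - snd v * fst w"

lemma Qf_scale: "Qf (c *\<^sub>R v) = c\<^sup>2 * Qf v"
  by (simp add: Qf_def power2_eq_square algebra_simps)

lemma Lk_Pv: "Lk k x y = Qf (Pv k x y)"
  using eg_pm[of k] by (auto simp: Lk_def Pv_def Qf_scale)

lemma Pv_shift: "Pv k x (y + r *\<^sub>R z) = Pv k x y - r *\<^sub>R z"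
  using eg_pm[of k] by (auto simp: Pv_def gl_def lift_def algebra_simps prod_eq_iff)

lemma Qf_diff: "Qf (v - r *\<^sub>R z) = Qf v - 2 * r * Bf v z + r\<^sup>2 * Qf z"
  by (simp add: Qf_def Bf_def power2_eq_square algebra_simps)

lemma Lk_shift: "Lk k x (y + r *\<^sub>R z) = Lk k x y - 2 * r * Bf (Pv k x y) z + r\<^sup>2 * Qf z"
  by (simp add: Lk_Pv Pv_shift Qf_diff)

lemma Bf_Jp_self: "Bf v (Jp v) = 0"
  by (simp add: Bf_def Jp_def field_simps)

lemma Bf_Jp: "Bf w (Jp v) = 3/2 * det2 w v"
  by (simp add: Bf_def Jp_def det2_def field_simps)

lemma Bf_self: "Bf v v = Qf v"
  by (simp add: Bf_def Qf_def power2_eq_square field_simps)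

lemma Bf_diff: "Bf (a - b) z = Bf a z - Bf b z"
  by (simp add: Bf_def field_simps)

lemma Bf_scale2: "Bf v (c *\<^sub>R z) = c * Bf v z"
  by (simp add: Bf_def field_simps)

lemma Qf_pos: "v \<noteq> 0 \<Longrightarrow> 0 < Qf v"
proof -
  assume v: "v \<noteq> 0"
  have "rho v \<noteq> 0" using v rho_eq_0 by blast
  hence "8 * Qf v \<noteq> 0" by (auto simp: rho_def)
  thus ?thesis using Qf_nonneg[of v] by linarith
qed

lemma noncol:
  assumes d1: "\<alpha> \<noteq> \<beta>" and d2: "\<beta> \<noteq> \<gamma>" and d3: "\<alpha> \<noteq> \<gamma>"
    and e1: "Qf \<alpha> = Qf \<beta>" and e2: "Qf \<gamma> = Qf \<beta>"
  shows "det2 (\<beta> - \<alpha>) (\<gamma> - \<beta>) \<noteq> 0"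
proof
  assume dz: "det2 (\<beta> - \<alpha>) (\<gamma> - \<beta>) = 0"
  define v where "v = \<gamma> - \<beta>"
  have v0: "v \<noteq> 0" using d2 unfolding v_def by simp
  obtain s where s: "\<beta> - \<alpha> = s *\<^sub>R v"
  proof (cases "fst v = 0")
    case True
    hence "snd v \<noteq> 0" using v0 by (simp add: prod_eq_iff)
    moreover have "fst (\<beta> - \<alpha>) * snd v = 0" using dz True unfolding v_def[symmetric] det2_def by simp
    ultimately have "fst (\<beta> - \<alpha>) = 0" by simp
    hence "\<beta> - \<alpha> = (snd (\<beta> - \<alpha>) / snd v) *\<^sub>R v" using True \<open>snd v \<noteq> 0\<close> by (simp add: prod_eq_iff)
    thus ?thesis using that by blast
  next
    case False
    have "snd (\<beta> - \<alpha>) = fst (\<beta> - \<alpha>) * snd v / fst v"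
      using dz False unfolding v_def[symmetric] det2_def by (simp add: field_simps)
    hence "\<beta> - \<alpha> = (fst (\<beta> - \<alpha>) / fst v) *\<^sub>R v" using False by (simp add: prod_eq_iff)
    thus ?thesis using that by blast
  qed
  have qv: "0 < Qf v" using Qf_pos[OF v0] .
  have ga: "\<gamma> = \<beta> + v" unfolding v_def by simp
  have al: "\<alpha> = \<beta> - s *\<^sub>R v" using s by (simp add: algebra_simps)
  have h1: "Qf \<gamma> = Qf \<beta> + 2 * Bf \<beta> v + Qf v"
    unfolding ga using Qf_diff[of \<beta> "-1" v] by (simp add: power2_eq_square)
  have h2: "Qf \<alpha> = Qf \<beta> - 2 * s * Bf \<beta> v + s\<^sup>2 * Qf v" unfolding al by (rule Qf_diff)
  have "2 * Bf \<beta> v = - Qf v" using h1 e2 by simp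
  hence "s * Qf v + s\<^sup>2 * Qf v = 0" using h2 e1 by (simp add: algebra_simps)
  hence "s * (1 + s) * Qf v = 0" by (simp add: power2_eq_square algebra_simps)
  hence "s = 0 \<or> s = -1" using qv by auto
  thus False
  proof
    assume "s = 0" thus False using al d1 by simp
  next
    assume "s = -1" thus False using al ga d3 by simp
  qed
qed

lemma lin_pos:
  fixes g r h :: real
  assumes g: "0 < g" and r: "0 < r" and rb: "r \<le> g / (2 * \<bar>h\<bar> + 1)"
  shows "0 < g + 2 * r * h"
proof -
  have pos: "0 < 2 * \<bar>h\<bar> + 1" by simp
  have "r * (2 * \<bar>h\<bar> + 1) \<le> g" using rb pos by (simp add: le_divide_eq)
  hence a: "2 * (r * \<bar>h\<bar>) + r \<le> g" by (simp add: algebra_simps)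
  have "- (r * \<bar>h\<bar>) \<le> r * h"
  proof -
    have "r * (- \<bar>h\<bar>) \<le> r * h" using r by (intro mult_left_mono) auto
    thus ?thesis by simp
  qed
  thus ?thesis using a r by linarith
qed

lemma absD1: "\<bar>a::real\<bar> < b \<Longrightarrow> a < b" by simp
lemma absD2: "\<bar>a::real\<bar> < b \<Longrightarrow> -b < a" by simp

lemma near_coords:
  assumes "near x y"
  shows "79/100 < fst x" "fst x < 81/100" "99/100 < snd x" "snd x < 101/100"
    "39/100 < fst y" "fst y < 41/100" "19/100 < snd y" "snd y < 21/100"
proof -
  have a: "\<bar>fst v\<bar> \<le> rho v" "\<bar>snd v\<bar> \<le> rho v" for v :: pt
  proof -
    have "\<bar>fst v\<bar> \<le> norm v" by (cases v) (auto simp: norm_Pair intro!: real_le_rsqrt)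
    moreover have "\<bar>snd v\<bar> \<le> norm v" by (cases v) (auto simp: norm_Pair intro!: real_le_rsqrt)
    ultimately show "\<bar>fst v\<bar> \<le> rho v" "\<bar>snd v\<bar> \<le> rho v" using norm_le_rho[of v] by auto
  qed
  have n: "rho (x - xP) < 1/100" "rho (y - yP) < 1/100" using assms by (auto simp: near_def)
  have h: "\<bar>fst x - 4/5\<bar> < 1/100" "\<bar>snd x - 1\<bar> < 1/100"
    using a[of "x - xP"] n(1) by (auto simp: xP_def)
  have h2: "\<bar>fst y - 2/5\<bar> < 1/100" "\<bar>snd y - 1/5\<bar> < 1/100"
    using a[of "y - yP"] n(2) by (auto simp: yP_def)
  have g: "fst x - 4/5 < 1/100" "-(1/100) < fst x - 4/5" "snd x - 1 < 1/100" "-(1/100) < snd x - 1"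
    "fst y - 2/5 < 1/100" "-(1/100) < fst y - 2/5" "snd y - 1/5 < 1/100" "-(1/100) < snd y - 1/5"
    using absD1[OF h(1)] absD2[OF h(1)] absD1[OF h(2)] absD2[OF h(2)]
      absD1[OF h2(1)] absD2[OF h2(1)] absD1[OF h2(2)] absD2[OF h2(2)] by auto
  show "79/100 < fst x" "fst x < 81/100" "99/100 < snd x" "snd x < 101/100"
    "39/100 < fst y" "fst y < 41/100" "19/100 < snd y" "snd y < 21/100" using g by linarith+
qed

lemma Pv_distinct:
  assumes n: "near x y" and i: "i \<in> {1,2,3,4}" and j: "j \<in> {1,2,3,4}" and ij: "i \<noteq> j"
  shows "Pv i x y \<noteq> Pv j x y"
proof
  assume eq: "Pv i x y = Pv j x y"
  have c: "79/100 < fst x" "fst x < 81/100" "99/100 < snd x" "snd x < 101/100" using near_coords[OF n] by auto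
  have "fst (Pv i x y) = fst (Pv j x y)" "snd (Pv i x y) = snd (Pv j x y)" using eq by auto
  thus False using i j ij c
    by (auto simp: Pv_def gl_def lift_def eg_def ig_def jg_def algebra_simps)
qed

lemma Lk_diff_shift:
  "Lk i x (y + r *\<^sub>R z) - Lk j x (y + r *\<^sub>R z) = Lk i x y - Lk j x y + 2 * r * Bf (Pv j x y - Pv i x y) z"
  by (simp add: Lk_shift Bf_diff algebra_simps)

lemma choose_r:
  fixes g h :: "nat \<Rightarrow> real"
  assumes R0: "0 < R0" and g: "\<And>k. k \<in> {1,2,3,4} \<Longrightarrow> k \<notin> M \<Longrightarrow> 0 < g k"
  shows "\<exists>r>0. r \<le> R0 \<and> (\<forall>k\<in>{1,2,3,4}. k \<notin> M \<longrightarrow> 0 < g k + 2 * r * h k)"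
proof -
  define bnd where "bnd k = (if k \<in> {1,2,3,4} \<and> k \<notin> M then g k / (2 * \<bar>h k\<bar> + 1) else 1)" for k
  have bp: "0 < bnd k" for k
  proof (cases "k \<in> {1,2,3,4} \<and> k \<notin> M")
    case True
    hence "0 < g k" using g by blast
    moreover have "0 < 2 * \<bar>h k\<bar> + 1" by simp
    moreover have "bnd k = g k / (2 * \<bar>h k\<bar> + 1)" unfolding bnd_def by (rule if_P[OF True])
    ultimately show ?thesis by simp
  next
    case False
    have "bnd k = 1" unfolding bnd_def by (rule if_not_P[OF False])
    thus ?thesis by simp
  qed
  define r where "r = min (min R0 (bnd 1)) (min (min (bnd 2) (bnd 3)) (bnd 4))"
  have rp: "0 < r" using R0 bp by (simp add: r_def)
  have rb: "r \<le> bnd k" if "k \<in> {1,2,3,4}" for k using that by (auto simp: r_def)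
  have "\<forall>k\<in>{1,2,3,4}. k \<notin> M \<longrightarrow> 0 < g k + 2 * r * h k"
  proof (intro ballI impI)
    fix k :: nat assume k: "k \<in> {1,2,3,4}" "k \<notin> M"
    have "bnd k = g k / (2 * \<bar>h k\<bar> + 1)" unfolding bnd_def by (rule if_P) (use k in blast)
    hence "r \<le> g k / (2 * \<bar>h k\<bar> + 1)" using rb[OF k(1)] by simp
    thus "0 < g k + 2 * r * h k" using lin_pos[OF g[OF k] rp] by blast
  qed
  moreover have "r \<le> R0" by (simp add: r_def)
  ultimately show ?thesis using rp by blast
qed

lemma near_move:
  assumes n: "near x y" and e: "0 < \<epsilon>" and rp: "0 < r"
    and rb: "r \<le> min \<epsilon> (1/100 - rho (y - yP)) / (2 * (rho z + 1))"
  shows "near x (y + r *\<^sub>R z)" "rho ((y + r *\<^sub>R z) - y) < \<epsilon>"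
proof -
  define m where "m = min \<epsilon> (1/100 - rho (y - yP))"
  have mp: "0 < m" using n e by (simp add: m_def near_def)
  have zp: "0 < 2 * (rho z + 1)" using rho_nonneg[of z] by simp
  have "r * (2 * (rho z + 1)) \<le> m" using rb zp unfolding m_def[symmetric] by (simp add: le_divide_eq)
  hence a: "2 * (r * rho z) + 2 * r \<le> m" by (simp add: algebra_simps)
  have rz: "rho (r *\<^sub>R z) = r * rho z" using rp by (simp add: rho_scale)
  have rzn: "0 \<le> r * rho z" using rp rho_nonneg[of z] by simp
  have lt: "r * rho z < m" using a rp rzn by linarith
  show "rho ((y + r *\<^sub>R z) - y) < \<epsilon>" using rz lt by (simp add: m_def)
  have "rho ((y + r *\<^sub>R z) - yP) \<le> rho (y - yP) + rho (r *\<^sub>R z)"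
    using rho_triangle[of "y - yP" "r *\<^sub>R z"] by (simp add: algebra_simps)
  hence "rho ((y + r *\<^sub>R z) - yP) < 1/100" using rz lt by (simp add: m_def)
  thus "near x (y + r *\<^sub>R z)" using n by (simp add: near_def)
qed

lemma MinSet_eqV: "k \<in> MinSet x y \<Longrightarrow> k' \<in> MinSet x y \<Longrightarrow> Lk k x y = Lk k' x y"
  using MinSetD MinSet_sub by (meson antisym)

lemma not_MinSet_gt:
  assumes "k \<in> {1,2,3,4}" "k \<notin> MinSet x y" "b \<in> MinSet x y"
  shows "Lk b x y < Lk k x y"
proof (rule ccontr)
  assume "\<not> Lk b x y < Lk k x y"
  hence le: "Lk k x y \<le> Lk b x y" by simp
  have "k \<in> MinSet x y" unfolding MinSet_def
  proof (intro CollectI conjI ballI)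
    show "k \<in> {1,2,3,4}" by (rule assms(1))
    fix k' :: nat assume "k' \<in> {1,2,3,4}"
    thus "Lk k x y \<le> Lk k' x y" using le MinSetD[OF assms(3)] by force
  qed
  thus False using assms(2) by blast
qed

lemma Rstep:
  assumes n: "near x y" and card: "card (MinSet x y) = 3" and b: "b \<in> MinSet x y" and e: "0 < \<epsilon>"
  shows "\<exists>y'. near x y' \<and> MinSet x y' = MinSet x y - {b} \<and> rho (y' - y) < \<epsilon>"
proof -
  let ?M = "MinSet x y"
  have fin: "finite ?M" by (rule finite_subset[of _ "{1,2,3,4}"]) (auto dest: MinSet_sub)
  have "card (?M - {b}) = 2" using card b fin by simp
  then obtain c d where cd: "?M - {b} = {c, d}" "c \<noteq> d" by (auto simp: card_2_iff)
  have c: "c \<in> ?M" "c \<noteq> b" and d: "d \<in> ?M" "d \<noteq> b" using cd by blast+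
  have M: "?M = {b, c, d}" using cd b by blast
  have b4: "b \<in> {1,2,3,4}" and c4: "c \<in> {1,2,3,4}" and d4: "d \<in> {1,2,3,4}"
    using MinSet_sub b c d by blast+
  define \<alpha> where "\<alpha> = Pv b x y"
  define \<beta> where "\<beta> = Pv c x y"
  define \<gamma> where "\<gamma> = Pv d x y"
  have dab: "\<alpha> \<noteq> \<beta>" unfolding \<alpha>_def \<beta>_def using Pv_distinct[OF n b4 c4] c by auto
  have dbg: "\<beta> \<noteq> \<gamma>" unfolding \<beta>_def \<gamma>_def using Pv_distinct[OF n c4 d4] cd by auto
  have dag: "\<alpha> \<noteq> \<gamma>" unfolding \<alpha>_def \<gamma>_def using Pv_distinct[OF n b4 d4] d by auto
  have qab: "Qf \<alpha> = Qf \<beta>" unfolding \<alpha>_def \<beta>_def using MinSet_eqV[OF b c(1)] by (simp add: Lk_Pv)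
  have qgb: "Qf \<gamma> = Qf \<beta>" unfolding \<gamma>_def \<beta>_def using MinSet_eqV[OF d(1) c(1)] by (simp add: Lk_Pv)
  define \<delta>0 where "\<delta>0 = det2 (\<beta> - \<alpha>) (\<gamma> - \<beta>)"
  have d0: "\<delta>0 \<noteq> 0" unfolding \<delta>0_def by (rule noncol[OF dab dbg dag qab qgb])
  define \<sigma> where "\<sigma> = (if 0 < \<delta>0 then 1 else -1 :: real)"
  define \<zeta> where "\<zeta> = \<sigma> *\<^sub>R Jp (\<gamma> - \<beta>)"
  have h1: "Bf (\<gamma> - \<beta>) \<zeta> = 0" unfolding \<zeta>_def by (simp add: Bf_scale2 Bf_Jp_self)
  have h2: "0 < Bf (\<beta> - \<alpha>) \<zeta>"
    unfolding \<zeta>_def using d0 by (auto simp: Bf_scale2 Bf_Jp \<delta>0_def[symmetric] \<sigma>_def)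
  define R0 where "R0 = min \<epsilon> (1/100 - rho (y - yP)) / (2 * (rho \<zeta> + 1))"
  have R0p: "0 < R0" using n e rho_nonneg[of \<zeta>] by (simp add: R0_def near_def)
  define g where "g k = Lk k x y - Lk c x y" for k
  define h where "h k = Bf (Pv c x y - Pv k x y) \<zeta>" for k
  have gp: "0 < g k" if "k \<in> {1,2,3,4}" "k \<notin> ?M" for k
    using not_MinSet_gt[OF that c(1)] by (simp add: g_def)
  have ex: "\<exists>r>0. r \<le> R0 \<and> (\<forall>k\<in>{1,2,3,4}. k \<notin> ?M \<longrightarrow> 0 < g k + 2 * r * h k)"
    by (rule choose_r[OF R0p gp])
  obtain r where r: "0 < r" "r \<le> R0" "\<forall>k\<in>{1,2,3,4}. k \<notin> ?M \<longrightarrow> 0 < g k + 2 * r * h k"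
    using ex by (elim exE conjE) (rule that; assumption)
  define y' where "y' = y + r *\<^sub>R \<zeta>"
  have nm: "near x y'" "rho (y' - y) < \<epsilon>" using near_move[OF n e r(1)] r(2) unfolding R0_def y'_def by auto
  have "MinSet x y' = {c, d}"
  proof (rule MinSet_gen[where V="Lk c x y'"])
    show "{c, d} \<subseteq> {1,2,3,4}" using c4 d4 by simp
    show "{c, d} \<noteq> {}" by simp
    fix k assume "k \<in> {c, d}"
    moreover have "Lk d x y' = Lk c x y'"
    proof -
      have "Lk d x y' - Lk c x y' = Lk d x y - Lk c x y + 2 * r * Bf (Pv c x y - Pv d x y) \<zeta>"
        unfolding y'_def by (rule Lk_diff_shift)
      moreover have "Pv c x y - Pv d x y = - (\<gamma> - \<beta>)" by (simp add: \<beta>_def \<gamma>_def)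
      moreover have "Bf (- (\<gamma> - \<beta>)) \<zeta> = - Bf (\<gamma> - \<beta>) \<zeta>" by (simp add: Bf_def field_simps)
      ultimately show ?thesis using h1 MinSet_eqV[OF d(1) c(1)] by simp
    qed
    ultimately show "Lk k x y' = Lk c x y'" by auto
  next
    fix k assume k: "k \<in> {1,2,3,4}" "k \<notin> {c, d}"
    have dif: "Lk k x y' - Lk c x y' = Lk k x y - Lk c x y + 2 * r * h k"
      unfolding y'_def h_def by (rule Lk_diff_shift)
    show "Lk c x y' < Lk k x y'"
    proof (cases "k \<in> ?M")
      case True
      hence kb: "k = b" using k M by blast
      have "h b = Bf (\<beta> - \<alpha>) \<zeta>" by (simp add: h_def \<alpha>_def \<beta>_def)
      hence "0 < 2 * r * h k" using h2 r(1) kb by simp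
      thus ?thesis using dif MinSet_eqV[OF True c(1)] by simp
    next
      case False
      have "0 < g k + 2 * r * h k" using r(3) k(1) False by blast
      thus ?thesis using dif unfolding g_def by linarith
    qed
  qed
  moreover have "MinSet x y - {b} = {c, d}" using cd by simp
  ultimately show ?thesis using nm by (intro exI[of _ y']) auto
qed

lemma Sstep:
  assumes n: "near x y" and card: "card (MinSet x y) = 2" and c: "c \<in> MinSet x y" and e: "0 < \<epsilon>"
  shows "\<exists>y'. near x y' \<and> MinSet x y' = MinSet x y - {c} \<and> rho (y' - y) < \<epsilon>"
proof -
  let ?M = "MinSet x y"
  have fin: "finite ?M" by (rule finite_subset[of _ "{1,2,3,4}"]) (auto dest: MinSet_sub)
  have "card (?M - {c}) = 1" using card c fin by simp
  then obtain d where dd: "?M - {c} = {d}" by (auto simp: card_1_singleton_iff)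
  have d: "d \<in> ?M" "d \<noteq> c" using dd by blast+
  have c4: "c \<in> {1,2,3,4}" and d4: "d \<in> {1,2,3,4}" using MinSet_sub c d by blast+
  have M: "?M = {c, d}" using dd c by blast
  define \<zeta> where "\<zeta> = Pv d x y - Pv c x y"
  have z0: "\<zeta> \<noteq> 0" unfolding \<zeta>_def using Pv_distinct[OF n d4 c4] d by auto
  have qz: "0 < Qf \<zeta>" using Qf_pos[OF z0] .
  define R0 where "R0 = min \<epsilon> (1/100 - rho (y - yP)) / (2 * (rho \<zeta> + 1))"
  have R0p: "0 < R0" using n e rho_nonneg[of \<zeta>] by (simp add: R0_def near_def)
  define g where "g k = Lk k x y - Lk d x y" for k
  define h where "h k = Bf (Pv d x y - Pv k x y) \<zeta>" for k
  have gp: "0 < g k" if "k \<in> {1,2,3,4}" "k \<notin> ?M" for k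
    using not_MinSet_gt[OF that d(1)] by (simp add: g_def)
  have ex: "\<exists>r>0. r \<le> R0 \<and> (\<forall>k\<in>{1,2,3,4}. k \<notin> ?M \<longrightarrow> 0 < g k + 2 * r * h k)"
    by (rule choose_r[OF R0p gp])
  obtain r where r: "0 < r" "r \<le> R0" "\<forall>k\<in>{1,2,3,4}. k \<notin> ?M \<longrightarrow> 0 < g k + 2 * r * h k"
    using ex by (elim exE conjE) (rule that; assumption)
  define y' where "y' = y + r *\<^sub>R \<zeta>"
  have nm: "near x y'" "rho (y' - y) < \<epsilon>" using near_move[OF n e r(1)] r(2) unfolding R0_def y'_def by auto
  have "MinSet x y' = {d}"
  proof (rule MinSet_gen[where V="Lk d x y'"])
    show "{d} \<subseteq> {1,2,3,4}" using d4 by simp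
  next
    fix k assume k: "k \<in> {1,2,3,4}" "k \<notin> {d}"
    have dif: "Lk k x y' - Lk d x y' = Lk k x y - Lk d x y + 2 * r * h k"
      unfolding y'_def h_def by (rule Lk_diff_shift)
    show "Lk d x y' < Lk k x y'"
    proof (cases "k \<in> ?M")
      case True
      hence kc: "k = c" using k M by blast
      have "h c = Qf \<zeta>" by (simp add: h_def \<zeta>_def Bf_self)
      hence "0 < 2 * r * h k" using qz r(1) kc by simp
      thus ?thesis using dif MinSet_eqV[OF True d(1)] by simp
    next
      case False
      have "0 < g k + 2 * r * h k" using r(3) k(1) False by blast
      thus ?thesis using dif unfolding g_def by linarith
    qed
  qed auto
  thus ?thesis using nm dd by (intro exI[of _ y']) auto
qed

lemma Qstep:
  assumes a: "a \<in> {1,2,3,4}" and e: "0 < \<epsilon>"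
  shows "\<exists>x y. near x y \<and> MinSet x y = {1,2,3,4} - {a} \<and> rho (x - xP) < \<epsilon> \<and> rho (y - yP) < \<epsilon>"
proof -
  define m where "m = min \<epsilon> (1/100)"
  have mp: "0 < m" using e by (simp add: m_def)
  define S where "S = rho (dQ a) + rho (eQ a) + 1"
  have Sp: "0 < S" using rho_nonneg[of "dQ a"] rho_nonneg[of "eQ a"] by (simp add: S_def)
  define t where "t = m / S / 2"
  have tp: "0 < t" using mp Sp by (simp add: t_def)
  have tS: "t * S < m" using mp Sp by (simp add: t_def)
  have b1: "t * rho (dQ a) < m"
  proof -
    have "t * rho (dQ a) \<le> t * S" using tp rho_nonneg[of "eQ a"] by (intro mult_left_mono) (auto simp: S_def)
    thus ?thesis using tS by linarith
  qed
  have b2: "t * rho (eQ a) < m"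
  proof -
    have "t * rho (eQ a) \<le> t * S" using tp rho_nonneg[of "dQ a"] by (intro mult_left_mono) (auto simp: S_def)
    thus ?thesis using tS by linarith
  qed
  define x where "x = xP + t *\<^sub>R dQ a"
  define y where "y = yP + t *\<^sub>R eQ a"
  have rx: "rho (x - xP) = t * rho (dQ a)" using tp by (simp add: x_def rho_scale)
  have ry: "rho (y - yP) = t * rho (eQ a)" using tp by (simp add: y_def rho_scale)
  have "near x y" using rx ry b1 b2 by (simp add: near_def m_def)
  moreover have "MinSet x y = {1,2,3,4} - {a}" unfolding x_def y_def by (rule Qlevel[OF a tp])
  moreover have "rho (x - xP) < \<epsilon>" "rho (y - yP) < \<epsilon>" using rx ry b1 b2 by (simp_all add: m_def)
  ultimately show ?thesis by blast
qed

definition cl :: "pt \<Rightarrow> pt \<Rightarrow> pt \<Rightarrow> pt \<Rightarrow> real" where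
  "cl x1 y1 x2 y2 = max (td (u x1) (u x2)) (td (u y1) (u y2))"

lemma cl_rho: "cl x1 y1 x2 y2 \<le> max (rho (x1 - x2)) (rho (y1 - y2))"
  unfolding cl_def using td_le_rho[of x1 x2] td_le_rho[of y1 y2] by auto

lemma cl_tri: "cl x1 y1 x3 y3 \<le> cl x1 y1 x2 y2 + cl x2 y2 x3 y3"
proof -
  have "td (u x1) (u x3) \<le> td (u x1) (u x2) + td (u x2) (u x3)" by (rule td_tri)
  moreover have "td (u y1) (u y3) \<le> td (u y1) (u y2) + td (u y2) (u y3)" by (rule td_tri)
  ultimately show ?thesis unfolding cl_def by auto
qed

lemma uT: "(u x, u y) \<in> tet_surface \<times> tet_surface" by (simp add: T_range)

lemma get_index:
  assumes gm: "gmpr tet_surface td E \<phi>" and n: "near x y" and inE: "(u x, u y) \<in> E"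
  shows "\<exists>k t. k \<in> MinSet x y \<and> t \<in> {0..1} \<and> \<phi> (u x, u y) t = u ((1/2) *\<^sub>R (x + gl k y))"
proof -
  have "min_geodesic tet_surface td (u x) (u y) (\<phi> (u x, u y))" using gm inE unfolding gmpr_def by auto
  thus ?thesis using index_ex[OF n] by blast
qed

lemma get_delta:
  assumes gm: "gmpr tet_surface td E \<phi>" and inE: "(u x, u y) \<in> E"
  shows "\<exists>\<delta>>0. \<forall>q\<in>E. max (td (u x) (fst q)) (td (u y) (snd q)) < \<delta> \<longrightarrow>
            (\<forall>t\<in>{0..1}. td (\<phi> (u x, u y) t) (\<phi> q t) < 1/10)"
  using gm inE unfolding gmpr_def by (metis fst_conv snd_conv zero_less_divide_1_iff zero_less_numeral)

lemma excl2:
  assumes gm: "gmpr tet_surface td E \<phi>"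
    and n1: "near x1 y1" and k: "k \<in> MinSet x1 y1" and t: "t \<in> {0..1}"
    and ph: "\<phi> (u x1, u y1) t = u ((1/2) *\<^sub>R (x1 + gl k y1))"
    and close: "\<forall>q\<in>E. max (td (u x1) (fst q)) (td (u y1) (snd q)) < \<delta> \<longrightarrow>
                   (\<forall>t\<in>{0..1}. td (\<phi> (u x1, u y1) t) (\<phi> q t) < 1/10)"
    and n2: "near x2 y2" and nk: "k \<notin> MinSet x2 y2" and cl2: "cl x1 y1 x2 y2 < \<delta>"
  shows "(u x2, u y2) \<notin> E"
  using excl[OF gm n1 k t ph n2 nk close] cl2 unfolding cl_def by blast

lemma near_P: "near xP yP" by (simp add: near_def rho_zero)

lemma card_minus: "k \<in> S \<Longrightarrow> finite S \<Longrightarrow> card (S - {k}) = card S - 1" by simp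

lemma chain:
  fixes E :: "nat \<Rightarrow> ((real^3) \<times> (real^3)) set" and \<phi> :: "nat \<Rightarrow> ((real^3) \<times> (real^3)) \<Rightarrow> real \<Rightarrow> (real^3)"
  assumes gm: "\<And>j. j \<in> {1,2,3} \<Longrightarrow> gmpr tet_surface td (E j) (\<phi> j)"
    and cov: "\<And>p. p \<in> tet_surface \<times> tet_surface \<Longrightarrow> \<exists>j\<in>{1,2,3}. p \<in> E j"
  shows False
proof -
  obtain j1 where j1: "j1 \<in> {1,2,3}" "(u xP, u yP) \<in> E j1" using cov[OF uT] by blast
  obtain k1 t1 where k1: "k1 \<in> MinSet xP yP" "t1 \<in> {0..1}" "\<phi> j1 (u xP, u yP) t1 = u ((1/2) *\<^sub>R (xP + gl k1 yP))"
    using get_index[OF gm[OF j1(1)] near_P j1(2)] by blast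
  obtain \<delta>1 where d1: "\<delta>1 > 0" "\<forall>q\<in>E j1. max (td (u xP) (fst q)) (td (u yP) (snd q)) < \<delta>1 \<longrightarrow>
            (\<forall>t\<in>{0..1}. td (\<phi> j1 (u xP, u yP) t) (\<phi> j1 q t) < 1/10)"
    using get_delta[OF gm[OF j1(1)] j1(2)] by blast
  have k14: "k1 \<in> {1,2,3,4}" using MinSet_sub[OF k1(1)] .
  obtain qx qy where Q: "near qx qy" "MinSet qx qy = {1,2,3,4} - {k1}" "rho (qx - xP) < \<delta>1/2" "rho (qy - yP) < \<delta>1/2"
    using Qstep[OF k14, of "\<delta>1/2"] d1(1) by auto
  have clPQ: "cl xP yP qx qy < \<delta>1/2"
    using cl_rho[of xP yP qx qy] Q(3,4) rho_commute[of xP qx] rho_commute[of yP qy] by auto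
  have QnE1: "(u qx, u qy) \<notin> E j1"
  proof -
    have a: "k1 \<notin> MinSet qx qy" using Q(2) by simp
    have b: "cl xP yP qx qy < \<delta>1" using clPQ d1(1) by linarith
    show ?thesis by (rule excl2[OF gm[OF j1(1)] near_P k1(1) k1(2) k1(3) d1(2) Q(1) a b])
  qed
  obtain j2 where j2: "j2 \<in> {1,2,3}" "(u qx, u qy) \<in> E j2" using cov[OF uT] by blast
  have j21: "j2 \<noteq> j1" using QnE1 j2 by auto
  obtain k2 t2 where k2: "k2 \<in> MinSet qx qy" "t2 \<in> {0..1}" "\<phi> j2 (u qx, u qy) t2 = u ((1/2) *\<^sub>R (qx + gl k2 qy))"
    using get_index[OF gm[OF j2(1)] Q(1) j2(2)] by blast
  obtain \<delta>2 where d2: "\<delta>2 > 0" "\<forall>q\<in>E j2. max (td (u qx) (fst q)) (td (u qy) (snd q)) < \<delta>2 \<longrightarrow>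
            (\<forall>t\<in>{0..1}. td (\<phi> j2 (u qx, u qy) t) (\<phi> j2 q t) < 1/10)"
    using get_delta[OF gm[OF j2(1)] j2(2)] by blast
  have cQ: "card (MinSet qx qy) = 3" using Q(2) k14 by auto
  define e2 where "e2 = min (\<delta>1/4) (\<delta>2/2)"
  have e2p: "0 < e2" using d1(1) d2(1) by (simp add: e2_def)
  obtain ry where R: "near qx ry" "MinSet qx ry = MinSet qx qy - {k2}" "rho (ry - qy) < e2"
    using Rstep[OF Q(1) cQ k2(1) e2p] by blast
  have clQR: "cl qx qy qx ry < e2"
    using cl_rho[of qx qy qx ry] R(3) rho_commute[of qy ry] rho_zero e2p by auto
  have clPR: "cl xP yP qx ry < 3/4 * \<delta>1"
    using cl_tri[of xP yP qx ry qx qy] clPQ clQR by (simp add: e2_def)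
  have RnE1: "(u qx, u ry) \<notin> E j1"
  proof -
    have a: "k1 \<notin> MinSet qx ry" using R(2) Q(2) by simp
    have b: "cl xP yP qx ry < \<delta>1" using clPR d1(1) by linarith
    show ?thesis by (rule excl2[OF gm[OF j1(1)] near_P k1(1) k1(2) k1(3) d1(2) R(1) a b])
  qed
  have RnE2: "(u qx, u ry) \<notin> E j2"
  proof -
    have a: "k2 \<notin> MinSet qx ry" using R(2) by simp
    have b: "cl qx qy qx ry < \<delta>2" using clQR d2(1) unfolding e2_def by linarith
    show ?thesis by (rule excl2[OF gm[OF j2(1)] Q(1) k2(1) k2(2) k2(3) d2(2) R(1) a b])
  qed
  obtain j3 where j3: "j3 \<in> {1,2,3}" "(u qx, u ry) \<in> E j3" using cov[OF uT] by blast
  have j31: "j3 \<noteq> j1" "j3 \<noteq> j2" using RnE1 RnE2 j3 by auto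
  obtain k3 t3 where k3: "k3 \<in> MinSet qx ry" "t3 \<in> {0..1}" "\<phi> j3 (u qx, u ry) t3 = u ((1/2) *\<^sub>R (qx + gl k3 ry))"
    using get_index[OF gm[OF j3(1)] R(1) j3(2)] by blast
  obtain \<delta>3 where d3: "\<delta>3 > 0" "\<forall>q\<in>E j3. max (td (u qx) (fst q)) (td (u ry) (snd q)) < \<delta>3 \<longrightarrow>
            (\<forall>t\<in>{0..1}. td (\<phi> j3 (u qx, u ry) t) (\<phi> j3 q t) < 1/10)"
    using get_delta[OF gm[OF j3(1)] j3(2)] by blast
  have fQ: "finite (MinSet qx qy)" by (rule card_ge_0_finite) (use cQ in simp)
  have cR: "card (MinSet qx ry) = 2" using R(2) cQ k2(1) fQ by simp
  define e3 where "e3 = min (min (\<delta>1/4) (\<delta>2/2)) \<delta>3"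
  have e3p: "0 < e3" using d1(1) d2(1) d3(1) by (simp add: e3_def)
  obtain sy where S: "near qx sy" "MinSet qx sy = MinSet qx ry - {k3}" "rho (sy - ry) < e3"
    using Sstep[OF R(1) cR k3(1) e3p] by blast
  have clRS: "cl qx ry qx sy < e3"
    using cl_rho[of qx ry qx sy] S(3) rho_commute[of ry sy] rho_zero e3p by auto
  have clPS: "cl xP yP qx sy < \<delta>1"
    using cl_tri[of xP yP qx sy qx ry] clPR clRS by (simp add: e3_def)
  have clQS: "cl qx qy qx sy < \<delta>2"
    using cl_tri[of qx qy qx sy qx ry] clQR clRS by (simp add: e2_def e3_def)
  have SnE1: "(u qx, u sy) \<notin> E j1"
  proof -
    have a: "k1 \<notin> MinSet qx sy" using S(2) R(2) Q(2) by simp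
    show ?thesis by (rule excl2[OF gm[OF j1(1)] near_P k1(1) k1(2) k1(3) d1(2) S(1) a clPS])
  qed
  have SnE2: "(u qx, u sy) \<notin> E j2"
  proof -
    have a: "k2 \<notin> MinSet qx sy" using S(2) R(2) by simp
    show ?thesis by (rule excl2[OF gm[OF j2(1)] Q(1) k2(1) k2(2) k2(3) d2(2) S(1) a clQS])
  qed
  have SnE3: "(u qx, u sy) \<notin> E j3"
  proof -
    have a: "k3 \<notin> MinSet qx sy" using S(2) by simp
    have b: "cl qx ry qx sy < \<delta>3" using clRS unfolding e3_def by linarith
    show ?thesis by (rule excl2[OF gm[OF j3(1)] R(1) k3(1) k3(2) k3(3) d3(2) S(1) a b])
  qed
  obtain j4 where j4: "j4 \<in> {1,2,3}" "(u qx, u sy) \<in> E j4" using cov[OF uT] by blast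
  have "j4 \<noteq> j1" "j4 \<noteq> j2" "j4 \<noteq> j3" using SnE1 SnE2 SnE3 j4 by auto
  thus False using j1(1) j2(1) j3(1) j4(1) j21 j31 by auto
qed

theorem theorem4p1:
  shows "\<not> (\<exists>E1 E2 E3 \<phi>1 \<phi>2 \<phi>3.
            E1 \<union> E2 \<union> E3 = tet_surface \<times> tet_surface \<and>
            E1 \<inter> E2 = {} \<and> E1 \<inter> E3 = {} \<and> E2 \<inter> E3 = {} \<and>
            gmpr tet_surface tet_dist E1 \<phi>1 \<and>
            gmpr tet_surface tet_dist E2 \<phi>2 \<and>
            gmpr tet_surface tet_dist E3 \<phi>3)"
proof
  assume "\<exists>E1 E2 E3 \<phi>1 \<phi>2 \<phi>3.
            E1 \<union> E2 \<union> E3 = tet_surface \<times> tet_surface \<and>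
            E1 \<inter> E2 = {} \<and> E1 \<inter> E3 = {} \<and> E2 \<inter> E3 = {} \<and>
            gmpr tet_surface tet_dist E1 \<phi>1 \<and>
            gmpr tet_surface tet_dist E2 \<phi>2 \<and>
            gmpr tet_surface tet_dist E3 \<phi>3"
  then obtain E1 E2 E3 \<phi>1 \<phi>2 \<phi>3 where h:
    "E1 \<union> E2 \<union> E3 = tet_surface \<times> tet_surface"
    "gmpr tet_surface tet_dist E1 \<phi>1" "gmpr tet_surface tet_dist E2 \<phi>2" "gmpr tet_surface tet_dist E3 \<phi>3"
    by blast
  define E where "E j = (if j = (1::nat) then E1 else if j = 2 then E2 else E3)" for j
  define \<phi> where "\<phi> j = (if j = (1::nat) then \<phi>1 else if j = 2 then \<phi>2 else \<phi>3)" for j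
  show False
  proof (rule chain[of E \<phi>])
    fix j :: nat assume "j \<in> {1,2,3}"
    thus "gmpr tet_surface td (E j) (\<phi> j)" using h by (auto simp: E_def \<phi>_def)
  next
    fix p assume "p \<in> tet_surface \<times> tet_surface"
    hence "p \<in> E1 \<or> p \<in> E2 \<or> p \<in> E3" using h(1) by blast
    thus "\<exists>j\<in>{1,2,3}. p \<in> E j"
    proof (elim disjE)
      assume "p \<in> E1" thus ?thesis by (intro bexI[of _ 1]) (auto simp: E_def)
    next
      assume "p \<in> E2" thus ?thesis by (intro bexI[of _ 2]) (auto simp: E_def)
    next
      assume "p \<in> E3" thus ?thesis by (intro bexI[of _ 3]) (auto simp: E_def)
    qed
  qed
qed

end
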